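(* Let $R$ be a quotient root system, $\Phi\subseteq R^+$ an inversion set, and $A,B,C$ connected components of $G_\Phi^{\Phi^c}$. (i) If $A + B = A + C \neq A$, then $B = C$. (ii) If the standard sum $A + B + C$ is defined and $A + B + C = A + B$, then $A + C = A$ or $B + C = B$. (iii) If the standard sum $A + B + C$ is defined, $B+C$ is defined, and $A + B + C = B + C$, then $A + B = B$ or $B + C = C$.
   Context: A quotient root system (QRS) $R$ is the set of non-zero images of a root system $\Delta$ (with base $\Sigma$) under the orthogonal projection of its ambient Euclidean space onto $(\mathrm{span}\,J)^\perp$ for some $J\subsetneq\Sigma$; its base consists of the images of $\Sigma\setminus J$, and every root is an integer combination of the base with all coefficients $\ge0$ (positive roots, $R^+$) or all $\le0$. $\Phi\subseteq R^+$ is closed if $\alpha,\beta\in\Phi$, $\alpha+\beta\in R$ imply $\alpha+\beta\in\Phi$; co-closed if $\Phi^c:=R^+\setminus\Phi$ is closed; an inversion set if both. $G_\Phi^{\Phi^c}$ is the graph with vertex set $\Phi$ in which $\alpha,\alpha'$ are adjacent iff $\alpha-\alpha'\in\Phi^c\cup(-\Phi^c)$; components are its connected components. Addition of components: for components $A,B$ let $Z=\{\alpha+\beta:\alpha\in A,\beta\in B\}\cap R$. If $Z\ne\emptyset$ lies in a single component $C$, $A+B:=C$. If $Z$ meets more than one component, then (as established in the paper) $A=B$ and $Z$ meets exactly two components, $A$ and some $C\ne A$; then $A+A:=C$. If $Z=\emptyset$, $A+B$ is undefined. The standard sum $A+B+C$ means $(A+B)+C$ with both sums defined. Equalities between sums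 are understood to include that the sums involved are defined. *)

theory Defs
  imports "HOL-Analysis.Analysis"
begin

definition root_system :: "'a::euclidean_space set \<Rightarrow> bool" where
  "root_system \<Delta> \<longleftrightarrow>
     finite \<Delta> \<and> 0 \<notin> \<Delta> \<and>
     (\<forall>\<alpha>\<in>\<Delta>. \<forall>\<beta>\<in>\<Delta>. \<beta> - (2 * (\<beta> \<bullet> \<alpha>) / (\<alpha> \<bullet> \<alpha>)) *\<^sub>R \<alpha> \<in> \<Delta>) \<and>
     (\<forall>\<alpha>\<in>\<Delta>. \<forall>\<beta>\<in>\<Delta>. 2 * (\<beta> \<bullet> \<alpha>) / (\<alpha> \<bullet> \<alpha>) \<in> \<int>) \<and>
     (\<forall>\<alpha>\<in>\<Delta>. \<forall>c::real. c *\<^sub>R \<alpha> \<in> \<Delta> \<longrightarrow> c = 1 \<or> c = -1)"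

definition is_base :: "'a::euclidean_space set \<Rightarrow> 'a set \<Rightarrow> bool" where
  "is_base \<Delta> \<Sigma> \<longleftrightarrow> \<Sigma> \<subseteq> \<Delta> \<and> independent \<Sigma> \<and>
     (\<forall>\<alpha>\<in>\<Delta>. \<exists>c::'a \<Rightarrow> int. \<alpha> = (\<Sum>\<sigma>\<in>\<Sigma>. of_int (c \<sigma>) *\<^sub>R \<sigma>) \<and>
        ((\<forall>\<sigma>\<in>\<Sigma>. c \<sigma> \<ge> 0) \<or> (\<forall>\<sigma>\<in>\<Sigma>. c \<sigma> \<le> 0)))"

definition qproj :: "'a::euclidean_space set \<Rightarrow> 'a \<Rightarrow> 'a" where
  "qproj J v = (THE w. w \<in> orthogonal_comp (span J) \<and> v - w \<in> span J)"

definition QRS :: "'a::euclidean_space set \<Rightarrow> 'a set \<Rightarrow> 'a set" where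
  "QRS \<Delta> J = qproj J ` \<Delta> - {0}"

definition QRS_base :: "'a::euclidean_space set \<Rightarrow> 'a set \<Rightarrow> 'a set" where
  "QRS_base \<Sigma> J = qproj J ` (\<Sigma> - J)"

definition QRS_pos :: "'a::euclidean_space set \<Rightarrow> 'a set \<Rightarrow> 'a set \<Rightarrow> 'a set" where
  "QRS_pos \<Delta> \<Sigma> J = {\<beta> \<in> QRS \<Delta> J. \<exists>c::'a \<Rightarrow> int.
      \<beta> = (\<Sum>\<tau>\<in>QRS_base \<Sigma> J. of_int (c \<tau>) *\<^sub>R \<tau>) \<and> (\<forall>\<tau>\<in>QRS_base \<Sigma> J. c \<tau> \<ge> 0)}"

definition closed_in_rs :: "'a::euclidean_space set \<Rightarrow> 'a set \<Rightarrow> bool" where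
  "closed_in_rs R \<Phi> \<longleftrightarrow> (\<forall>\<alpha>\<in>\<Phi>. \<forall>\<beta>\<in>\<Phi>. \<alpha> + \<beta> \<in> R \<longrightarrow> \<alpha> + \<beta> \<in> \<Phi>)"

definition inversion_set :: "'a::euclidean_space set \<Rightarrow> 'a set \<Rightarrow> 'a set \<Rightarrow> bool" where
  "inversion_set R Rpos \<Phi> \<longleftrightarrow> \<Phi> \<subseteq> Rpos \<and> closed_in_rs R \<Phi> \<and> closed_in_rs R (Rpos - \<Phi>)"

definition graph_edges :: "'a::euclidean_space set \<Rightarrow> 'a set \<Rightarrow> ('a \<times> 'a) set" where
  "graph_edges Rpos \<Phi> = {(\<alpha>, \<alpha>'). \<alpha> \<in> \<Phi> \<and> \<alpha>' \<in> \<Phi> \<and>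
      (\<alpha> - \<alpha>' \<in> Rpos - \<Phi> \<or> \<alpha>' - \<alpha> \<in> Rpos - \<Phi>)}"

definition components :: "'a::euclidean_space set \<Rightarrow> 'a set \<Rightarrow> 'a set set" where
  "components Rpos \<Phi> = \<Phi> // ((graph_edges Rpos \<Phi>)\<^sup>*)"

definition comp_sumset :: "'a::euclidean_space set \<Rightarrow> 'a set \<Rightarrow> 'a set \<Rightarrow> 'a set" where
  "comp_sumset R A B = {\<alpha> + \<beta> | \<alpha> \<beta>. \<alpha> \<in> A \<and> \<beta> \<in> B} \<inter> R"

text \<open>\<open>comp_add R Rpos \<Phi> A B = Some C\<close> means that \<open>A + B\<close> is defined and equals \<open>C\<close>;
  \<open>None\<close> means undefined.\<close>
definition comp_add ::
  "'a::euclidean_space set \<Rightarrow> 'a set \<Rightarrow> 'a set \<Rightarrow> 'a set \<Rightarrow> 'a set \<Rightarrow> 'a set option" where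
  "comp_add R Rpos \<Phi> A B =
     (let Z = comp_sumset R A B; K = components Rpos \<Phi> in
      if Z = {} then None
      else if (\<exists>C\<in>K. Z \<subseteq> C) then Some (THE C. C \<in> K \<and> Z \<subseteq> C)
      else if A = B \<and> (\<exists>C\<in>K. C \<noteq> A \<and> Z \<subseteq> A \<union> C \<and> Z \<inter> A \<noteq> {} \<and> Z \<inter> C \<noteq> {})
        then Some (THE C. C \<in> K \<and> C \<noteq> A \<and> Z \<subseteq> A \<union> C \<and> Z \<inter> A \<noteq> {} \<and> Z \<inter> C \<noteq> {})
      else None)"

end

theory Submission
  imports Defs
begin

lemma GTP:
  fixes E :: "('a::real_inner \<times> 'a) set"
  assumes fin: "finite G" and d: "\<delta> \<noteq> 0"
    and G1: "\<And>u. u \<in> G \<Longrightarrow> (u, u + \<delta>) \<in> E ^^ k"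
    and G2: "\<And>u w. u \<in> G \<Longrightarrow> (u, w) \<in> E \<Longrightarrow> (w, u + \<delta>) \<in> E ^^ (k - 1)
              \<Longrightarrow> w \<in> G \<and> (u + \<delta>, w + \<delta>) \<in> E"
  shows "G = {}"
proof -
  have step: "\<And>j. j \<le> k \<Longrightarrow> (\<forall>u w. u \<in> G \<longrightarrow> (u, w) \<in> E ^^ j \<longrightarrow> (w, u + \<delta>) \<in> E ^^ (k - j)
      \<longrightarrow> w \<in> G \<and> (u + \<delta>, w + \<delta>) \<in> E ^^ j)"
  proof -
    fix j show "j \<le> k \<Longrightarrow> (\<forall>u w. u \<in> G \<longrightarrow> (u, w) \<in> E ^^ j \<longrightarrow> (w, u + \<delta>) \<in> E ^^ (k - j)
      \<longrightarrow> w \<in> G \<and> (u + \<delta>, w + \<delta>) \<in> E ^^ j)"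
    proof (induction j)
      case 0
      then show ?case by auto
    next
      case (Suc j)
      show ?case
      proof (intro allI impI)
        fix u w assume u: "u \<in> G" and uw: "(u, w) \<in> E ^^ Suc j" and wu: "(w, u + \<delta>) \<in> E ^^ (k - Suc j)"
        from uw obtain w0 where uw0: "(u, w0) \<in> E ^^ j" and w0w: "(w0, w) \<in> E" by (rule relpow_Suc_E)
        have kj: "k - j = Suc (k - Suc j)" using Suc.prems by simp
        have "(w0, u + \<delta>) \<in> E ^^ (k - j)" unfolding kj by (rule relpow_Suc_I2[OF w0w wu])
        with Suc.IH Suc.prems u uw0 have w0G: "w0 \<in> G" and ud: "(u + \<delta>, w0 + \<delta>) \<in> E ^^ j" by auto
        have "(w, w0 + \<delta>) \<in> E ^^ (k - Suc j + j)" unfolding relpow_add using wu ud by blast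
        moreover have "k - Suc j + j = k - 1" using Suc.prems by simp
        ultimately have "(w, w0 + \<delta>) \<in> E ^^ (k - 1)" by simp
        from G2[OF w0G w0w this] have "w \<in> G" and e: "(w0 + \<delta>, w + \<delta>) \<in> E" by auto
        moreover have "(u + \<delta>, w + \<delta>) \<in> E ^^ Suc j" by (rule relpow_Suc_I[OF ud e])
        ultimately show "w \<in> G \<and> (u + \<delta>, w + \<delta>) \<in> E ^^ Suc j" by simp
      qed
    qed
  qed
  have clos: "u + \<delta> \<in> G" if "u \<in> G" for u
    using step[of k] G1[OF that] that by auto
  show ?thesis
  proof (rule ccontr)
    assume ne: "G \<noteq> {}"
    let ?f = "\<lambda>x. x \<bullet> \<delta>"
    have "Max (?f ` G) \<in> ?f ` G" using fin ne by (intro Max_in) auto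
    then obtain m where mG: "m \<in> G" and mm: "?f m = Max (?f ` G)" by auto
    have "?f (m + \<delta>) \<le> Max (?f ` G)" using fin clos[OF mG] by (intro Max_ge) auto
    moreover have "?f (m + \<delta>) = ?f m + \<delta> \<bullet> \<delta>" by (simp add: inner_add_left)
    moreover have "\<delta> \<bullet> \<delta> > 0" using d by simp
    ultimately show False using mm by linarith
  qed
qed


locale invsys =
  fixes R P Phi :: "'a::euclidean_space set"
  assumes finR: "finite R"
    and zR: "0 \<notin> R"
    and negR: "x \<in> R \<Longrightarrow> -x \<in> R"
    and PR: "P \<subseteq> R"
    and Psplit: "x \<in> R \<Longrightarrow> x \<in> P \<or> -x \<in> P"
    and Pdisj: "x \<in> P \<Longrightarrow> -x \<notin> P"
    and Padd: "x \<in> P \<Longrightarrow> y \<in> P \<Longrightarrow> x + y \<in> R \<Longrightarrow> x + y \<in> P"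
    and P1: "\<alpha> \<in> R \<Longrightarrow> \<beta> \<in> R \<Longrightarrow> \<gamma> \<in> R \<Longrightarrow> \<alpha> + \<beta> \<in> R \<Longrightarrow> \<alpha> + \<beta> + \<gamma> \<in> R
              \<Longrightarrow> \<alpha> + \<gamma> \<noteq> 0 \<Longrightarrow> \<beta> + \<gamma> \<noteq> 0 \<Longrightarrow> \<alpha> + \<gamma> \<in> R \<or> \<beta> + \<gamma> \<in> R"
    and PhiP: "Phi \<subseteq> P"
    and Phicl: "x \<in> Phi \<Longrightarrow> y \<in> Phi \<Longrightarrow> x + y \<in> R \<Longrightarrow> x + y \<in> Phi"
    and Fcl: "x \<in> P - Phi \<Longrightarrow> y \<in> P - Phi \<Longrightarrow> x + y \<in> R \<Longrightarrow> x + y \<in> P - Phi"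
begin

abbreviation "E \<equiv> graph_edges P Phi"

definition gF :: "'a \<Rightarrow> bool" where "gF g \<longleftrightarrow> g \<in> P - Phi \<or> -g \<in> P - Phi"

lemma PhiR: "x \<in> Phi \<Longrightarrow> x \<in> R" using PhiP PR by auto

lemma gFR: "gF g \<Longrightarrow> g \<in> R"
  unfolding gF_def using PR negR by force

lemma gF_neg[simp]: "gF (-g) \<longleftrightarrow> gF g"
  unfolding gF_def by auto

lemma gF_notPhi: "gF g \<Longrightarrow> g \<notin> Phi"
  unfolding gF_def using Pdisj PhiP by fastforce

lemma gF_neq: "gF g \<Longrightarrow> x \<in> Phi \<Longrightarrow> x \<noteq> g \<and> x \<noteq> -g"
  using gF_notPhi gF_neg by metis

lemma Phi_sum_nz: "x \<in> Phi \<Longrightarrow> y \<in> Phi \<Longrightarrow> x + y \<noteq> 0"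
proof
  assume "x \<in> Phi" "y \<in> Phi" "x + y = 0"
  then have "y = -x" by (simp add: add_eq_0_iff)
  then show False using \<open>x \<in> Phi\<close> \<open>y \<in> Phi\<close> PhiP Pdisj by auto
qed

lemma E_iff: "(x, y) \<in> E \<longleftrightarrow> x \<in> Phi \<and> y \<in> Phi \<and> gF (y - x)"
  unfolding graph_edges_def gF_def by (auto simp: minus_diff_eq)

lemma E_sym: "(x, y) \<in> E \<Longrightarrow> (y, x) \<in> E"
  unfolding E_iff by (metis gF_neg minus_diff_eq)

lemma rt_sym: "(x, y) \<in> E\<^sup>* \<Longrightarrow> (y, x) \<in> E\<^sup>*"
proof (induction rule: rtrancl_induct)
  case base then show ?case by simp
next
  case (step y z) then show ?case using E_sym by (meson converse_rtrancl_into_rtrancl)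
qed

lemma rt_Phi: "(x, y) \<in> E\<^sup>* \<Longrightarrow> x \<in> Phi \<Longrightarrow> y \<in> Phi"
  by (induction rule: rtrancl_induct) (auto simp: E_iff)

lemma rt_trans: "(x, y) \<in> E\<^sup>* \<Longrightarrow> (y, z) \<in> E\<^sup>* \<Longrightarrow> (x, z) \<in> E\<^sup>*" by simp

lemma rt_step: "(x, y) \<in> E \<Longrightarrow> (w, x) \<in> E\<^sup>* \<Longrightarrow> (w, y) \<in> E\<^sup>*"
  by (rule rtrancl_into_rtrancl)

lemma edge: "x \<in> Phi \<Longrightarrow> x + g \<in> Phi \<Longrightarrow> gF g \<Longrightarrow> (x, x + g) \<in> E"
  by (simp add: E_iff)

lemma edge': "x \<in> Phi \<Longrightarrow> y \<in> Phi \<Longrightarrow> gF (y - x) \<Longrightarrow> (x, y) \<in> E"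
  by (simp add: E_iff)

lemma sgn_add: assumes p: "p \<in> Phi" and g: "gF g" and r: "p + g \<in> R"
  shows "p + g \<in> Phi \<or> gF (p + g)"
proof -
  have "p + g \<in> P \<or> -(p + g) \<in> P" using Psplit[OF r] by blast
  moreover have "-(p + g) \<notin> Phi"
  proof
    assume n: "-(p + g) \<in> Phi"
    show False
    proof (cases "g \<in> P - Phi")
      case True
      then have "p + g \<in> P" using Padd p PhiP r by auto
      then show False using n Pdisj[of "p + g"] PhiP by blast
    next
      case False
      then have mg: "-g \<in> P - Phi" using g unfolding gF_def by auto
      have "p + -(p + g) = -g" by simp
      then have "-g \<in> Phi" using Phicl[OF p n] gFR g negR by (metis)
      then show False using mg by auto
    qed
  qed
  ultimately show ?thesis unfolding gF_def by auto
qed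

lemma movel:
  assumes p: "p \<in> Phi" and q: "q \<in> Phi" and pq: "p + q \<in> R" and g: "gF g" and pg: "p + g \<in> Phi"
  shows "(p + g + q \<in> Phi \<and> (p + q, p + g + q) \<in> E) \<or> (q + -g \<in> Phi \<and> (q, q + -g) \<in> E)
         \<or> (p + q, p + g) \<in> E"
proof -
  have pqP: "p + q \<in> Phi" using Phicl p q pq by auto
  have "p + g + q \<in> R \<or> -g + q \<in> R"
  proof (rule P1)
    show "p + g \<in> R" using pg PhiR by auto
    show "-g \<in> R" using g gFR negR by auto
    show "q \<in> R" using q PhiR by auto
    show "p + g + - g \<in> R" using p PhiR by simp
    show "p + g + - g + q \<in> R" using pq by simp
    show "p + g + q \<noteq> 0" using Phi_sum_nz[OF pg q] .
    show "- g + q \<noteq> 0" using gF_neq[OF g q] by (auto simp: add_eq_0_iff)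
  qed
  then show ?thesis
  proof
    assume "p + g + q \<in> R"
    then have "p + g + q \<in> Phi" using Phicl pg q by auto
    moreover have "(p + q, p + g + q) \<in> E"
      using edge[OF pqP, of g] g \<open>p + g + q \<in> Phi\<close> by (simp add: algebra_simps)
    ultimately show ?thesis by simp
  next
    assume "-g + q \<in> R"
    then have r: "q + -g \<in> R" by (simp add: add.commute)
    from sgn_add[OF q _ r] g have "q + -g \<in> Phi \<or> gF (q + -g)" by simp
    then show ?thesis
    proof
      assume "q + -g \<in> Phi"
      then show ?thesis using edge[OF q, of "-g"] g by simp
    next
      assume "gF (q + -g)"
      then have "gF ((p + g) - (p + q))" by (metis gF_neg minus_diff_eq diff_conv_add_uminus add_diff_cancel_left)
      then show ?thesis using edge'[OF pqP pg] by simp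
    qed
  qed
qed


lemma TR:
  assumes p: "p \<in> Phi" and q: "q \<in> Phi" and pq: "p + q \<in> R" and pp: "(p, p') \<in> E\<^sup>*"
    and nsp: "(p + q, p) \<notin> E\<^sup>*"
  shows "\<exists>q'. (q, q') \<in> E\<^sup>* \<and> p' + q' \<in> R \<and> (p + q, p' + q') \<in> E\<^sup>*"
  using pp
proof (induction rule: rtrancl_induct)
  case base
  then show ?case using pq by auto
next
  case (step p1 p2)
  from step.IH obtain q1 where q1: "(q, q1) \<in> E\<^sup>*" and r1: "p1 + q1 \<in> R" and s1: "(p + q, p1 + q1) \<in> E\<^sup>*"
    by blast
  have p1: "p1 \<in> Phi" using rt_Phi[OF step.hyps(1) p] .
  have q1P: "q1 \<in> Phi" using rt_Phi[OF q1 q] .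
  define g where "g = p2 - p1"
  have g: "gF g" and p2: "p2 \<in> Phi" using step.hyps(2) unfolding E_iff g_def by auto
  have p2e: "p2 = p1 + g" unfolding g_def by simp
  from movel[OF p1 q1P r1 g] p2 p2e
  have "(p1 + g + q1 \<in> Phi \<and> (p1 + q1, p1 + g + q1) \<in> E) \<or> (q1 + -g \<in> Phi \<and> (q1, q1 + -g) \<in> E)
         \<or> (p1 + q1, p1 + g) \<in> E" by simp
  then show ?case
  proof (elim disjE conjE)
    assume "p1 + g + q1 \<in> Phi" "(p1 + q1, p1 + g + q1) \<in> E"
    then show ?case using q1 s1 p2e PhiR
      by (intro exI[of _ q1]) (auto intro: rtrancl_into_rtrancl)
  next
    assume a: "q1 + -g \<in> Phi" "(q1, q1 + -g) \<in> E"
    have eq: "p2 + (q1 + -g) = p1 + q1" using p2e by simp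
    show ?case
    proof (intro exI[of _ "q1 + -g"] conjI)
      show "(q, q1 + -g) \<in> E\<^sup>*" using q1 a(2) by (rule rtrancl_into_rtrancl)
      show "p2 + (q1 + -g) \<in> R" unfolding eq by (rule r1)
      show "(p + q, p2 + (q1 + -g)) \<in> E\<^sup>*" unfolding eq by (rule s1)
    qed
  next
    assume "(p1 + q1, p1 + g) \<in> E"
    then have "(p1 + q1, p2) \<in> E" using p2e by simp
    then have "(p + q, p2) \<in> E\<^sup>*" by (rule rtrancl_into_rtrancl[OF s1])
    moreover have "(p, p2) \<in> E\<^sup>*" using step.hyps(1) step.hyps(2) by (rule rtrancl_into_rtrancl)
    then have "(p2, p) \<in> E\<^sup>*" by (rule rt_sym)
    ultimately have "(p + q, p) \<in> E\<^sup>*" by (rule rtrancl_trans)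
    then show ?case using nsp by simp
  qed
qed

lemma MS:
  assumes p: "p \<in> Phi" and q: "q \<in> Phi" and pq: "p + q \<in> R" and g: "gF g" and s: "p + q + g \<in> Phi"
  shows "p + g \<in> Phi \<or> q + g \<in> Phi \<or> (p + q + g, q) \<in> E \<or> (p + q + g, p) \<in> E"
proof -
  have "p + g \<in> R \<or> q + g \<in> R"
  proof (rule P1)
    show "p \<in> R" "q \<in> R" using p q PhiR by auto
    show "g \<in> R" using g gFR by auto
    show "p + q \<in> R" by fact
    show "p + q + g \<in> R" using s PhiR by auto
    show "p + g \<noteq> 0" using gF_neq[OF g p] by (auto simp: add_eq_0_iff)
    show "q + g \<noteq> 0" using gF_neq[OF g q] by (auto simp: add_eq_0_iff)
  qed
  then show ?thesis
  proof
    assume r: "p + g \<in> R"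
    from sgn_add[OF p g r] show ?thesis
    proof
      assume "gF (p + g)"
      moreover have "q - (p + q + g) = -(p + g)" by (simp add: algebra_simps)
      ultimately have "gF (q - (p + q + g))" by (metis gF_neg)
      then show ?thesis using edge'[OF s q] by simp
    qed simp
  next
    assume r: "q + g \<in> R"
    from sgn_add[OF q g r] show ?thesis
    proof
      assume "gF (q + g)"
      moreover have "p - (p + q + g) = -(q + g)" by (simp add: algebra_simps)
      ultimately have "gF (p - (p + q + g))" by (metis gF_neg)
      then show ?thesis using edge'[OF s p] by simp
    qed simp
  qed
qed

lemma TS:
  assumes p: "p \<in> Phi" and q: "q \<in> Phi" and pq: "p + q \<in> R" and ss: "(p + q, s) \<in> E\<^sup>*"
    and n1: "(p + q, p) \<notin> E\<^sup>*" and n2: "(p + q, q) \<notin> E\<^sup>*"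
  shows "\<exists>p' q'. (p, p') \<in> E\<^sup>* \<and> (q, q') \<in> E\<^sup>* \<and> s = p' + q'"
  using ss
proof (induction rule: rtrancl_induct)
  case base
  then show ?case by auto
next
  case (step s1 s2)
  from step.IH obtain p1 q1 where pp: "(p, p1) \<in> E\<^sup>*" and qq: "(q, q1) \<in> E\<^sup>*" and s1: "s1 = p1 + q1"
    by blast
  have p1: "p1 \<in> Phi" using rt_Phi[OF pp p] .
  have q1: "q1 \<in> Phi" using rt_Phi[OF qq q] .
  define g where "g = s2 - s1"
  have g: "gF g" and s2: "s2 \<in> Phi" and s1P: "s1 \<in> Phi" using step.hyps(2) unfolding E_iff g_def by auto
  have s2e: "s2 = p1 + q1 + g" unfolding g_def s1 by simp
  have r1: "p1 + q1 \<in> R" using s1P s1 PhiR by auto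
  from MS[OF p1 q1 r1 g] s2 s2e
  have "p1 + g \<in> Phi \<or> q1 + g \<in> Phi \<or> (s2, q1) \<in> E \<or> (s2, p1) \<in> E" by simp
  then show ?case
  proof (elim disjE)
    assume a: "p1 + g \<in> Phi"
    then have "(p1, p1 + g) \<in> E" using edge p1 g by auto
    then have "(p, p1 + g) \<in> E\<^sup>*" using pp by (meson rtrancl_into_rtrancl)
    moreover have "s2 = (p1 + g) + q1" using s2e by (simp add: algebra_simps)
    ultimately show ?case using qq by blast
  next
    assume a: "q1 + g \<in> Phi"
    then have "(q1, q1 + g) \<in> E" using edge q1 g by auto
    then have "(q, q1 + g) \<in> E\<^sup>*" using qq by (meson rtrancl_into_rtrancl)
    moreover have "s2 = p1 + (q1 + g)" using s2e by (simp add: algebra_simps)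
    ultimately show ?case using pp by blast
  next
    assume "(s2, q1) \<in> E"
    then have "(s1, q1) \<in> E\<^sup>*" using step.hyps(2) by (meson r_into_rtrancl rtrancl_trans)
    then have "(p + q, q1) \<in> E\<^sup>*" by (rule rtrancl_trans[OF step.hyps(1)])
    then have "(p + q, q) \<in> E\<^sup>*" using rt_sym[OF qq] by (rule rtrancl_trans)
    with n2 show ?case by simp
  next
    assume "(s2, p1) \<in> E"
    then have "(s1, p1) \<in> E\<^sup>*" using step.hyps(2) by (meson r_into_rtrancl rtrancl_trans)
    then have "(p + q, p1) \<in> E\<^sup>*" by (rule rtrancl_trans[OF step.hyps(1)])
    then have "(p + q, p) \<in> E\<^sup>*" using rt_sym[OF pp] by (rule rtrancl_trans)
    with n1 show ?case by simp
  qed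
qed


lemma finPhi: "finite Phi"
proof -
  have "Phi \<subseteq> R" using PhiP PR by auto
  then show ?thesis by (rule finite_subset[OF _ finR])
qed

lemma least_cfg:
  fixes Q :: "nat \<Rightarrow> bool"
  assumes "\<exists>n. Q n"
  obtains k where "Q k" "\<And>n. n < k \<Longrightarrow> \<not> Q n"
proof -
  have "Q (LEAST n. Q n)" using assms by (rule LeastI_ex)
  moreover have "\<And>n. n < (LEAST n. Q n) \<Longrightarrow> \<not> Q n" by (rule not_less_Least)
  ultimately show thesis using that by blast
qed

lemma relpow_pred: "(u, v) \<in> E ^^ k \<Longrightarrow> k = 0 \<Longrightarrow> u = v" by simp

lemma SLf:
  assumes a: "a \<in> Phi" and b: "b \<in> Phi" and bb: "(b, b') \<in> E\<^sup>*" and ab: "a + b \<in> R" and ab': "a + b' \<in> R"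
    and n1: "(a + b, a + b') \<notin> E\<^sup>*" and n2: "(a + b, b) \<notin> E\<^sup>*" and n3: "(a + b', a) \<notin> E\<^sup>*"
  shows False
proof -
  define Cfg where "Cfg a1 u v \<longleftrightarrow> (a, a1) \<in> E\<^sup>* \<and> (b, u) \<in> E\<^sup>* \<and> (b, v) \<in> E\<^sup>*
      \<and> (a + b, a1 + u) \<in> E\<^sup>* \<and> (a + b', a1 + v) \<in> E\<^sup>*" for a1 u v
  have abP: "a + b \<in> Phi" using Phicl a b ab by auto
  have b'P: "b' \<in> Phi" using rt_Phi[OF bb b] .
  have ab'P: "a + b' \<in> Phi" using Phicl a b'P ab' by auto
  obtain n0 where "(b, b') \<in> E ^^ n0" using bb rtrancl_power by blast
  define Q where "Q n \<longleftrightarrow> (\<exists>a1 u v. Cfg a1 u v \<and> (u, v) \<in> E ^^ n)" for n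
  have "\<exists>n. Q n" using bb \<open>(b, b') \<in> E ^^ n0\<close> unfolding Cfg_def Q_def by blast
  define k where "k = (LEAST n. Q n)"
  have "Q k" unfolding k_def using \<open>\<exists>n. Q n\<close> by (rule LeastI_ex)
  then have kex: "\<exists>a1 u v. Cfg a1 u v \<and> (u, v) \<in> E ^^ k" unfolding Q_def .
  have kmin: "\<not> (\<exists>a1 u v. Cfg a1 u v \<and> (u, v) \<in> E ^^ n)" if "n < k" for n
    using not_less_Least[OF that[unfolded k_def]] unfolding Q_def .
  from kex obtain a1 u0 v0 where c0: "Cfg a1 u0 v0" and k0: "(u0, v0) \<in> E ^^ k" by blast
  define x where "x = a1 + u0"
  define \<delta> where "\<delta> = v0 - u0"
  define G where "G = {u. Cfg (x - u) u (u + \<delta>) \<and> (u, u + \<delta>) \<in> E ^^ k}"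
  have u0G: "u0 \<in> G" unfolding G_def x_def \<delta>_def using c0 k0 by simp
  have "G \<subseteq> Phi" unfolding G_def Cfg_def using rt_Phi b by blast
  then have finG: "finite G" using finPhi finite_subset by blast
  have dnz: "\<delta> \<noteq> 0"
  proof
    assume "\<delta> = 0"
    then have "v0 = u0" unfolding \<delta>_def by simp
    then have "(a + b, a1 + u0) \<in> E\<^sup>*" "(a + b', a1 + u0) \<in> E\<^sup>*" using c0 unfolding Cfg_def by auto
    then have "(a + b, a + b') \<in> E\<^sup>*" using rt_sym by (meson rtrancl_trans)
    then show False using n1 by simp
  qed
  have "G = {}"
  proof (rule GTP[OF finG dnz])
    show "\<And>u. u \<in> G \<Longrightarrow> (u, u + \<delta>) \<in> E ^^ k" unfolding G_def by simp
  next
    fix u w assume uG: "u \<in> G" and uw: "(u, w) \<in> E" and wv: "(w, u + \<delta>) \<in> E ^^ (k - 1)"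
    define a' where "a' = x - u"
    define v where "v = u + \<delta>"
    define g where "g = w - u"
    have cu: "Cfg a' u v" and uv: "(u, v) \<in> E ^^ k" using uG unfolding G_def a'_def v_def by auto
    have k1: "k \<noteq> 0"
    proof
      assume "k = 0"
      then have "u = v" using uv by simp
      then show False using dnz unfolding v_def by simp
    qed
    have wv': "(w, v) \<in> E ^^ (k - 1)" using wv unfolding v_def .
    have g: "gF g" and uP: "u \<in> Phi" and wP: "w \<in> Phi" using uw unfolding E_iff g_def by auto
    have we: "w = u + g" unfolding g_def by simp
    have aa': "(a, a') \<in> E\<^sup>*" and bu: "(b, u) \<in> E\<^sup>*" and bv: "(b, v) \<in> E\<^sup>*"
      and xu: "(a + b, a' + u) \<in> E\<^sup>*" and yv: "(a + b', a' + v) \<in> E\<^sup>*" using cu unfolding Cfg_def by auto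
    have a'P: "a' \<in> Phi" using rt_Phi[OF aa' a] .
    have vP: "v \<in> Phi" using rt_Phi[OF bv b] .
    have a'u: "a' + u = x" unfolding a'_def by simp
    have xP: "x \<in> Phi" using rt_Phi[OF xu abP] a'u by simp
    have yP: "a' + v \<in> Phi" using rt_Phi[OF yv ab'P] .
    have bw: "(b, w) \<in> E\<^sup>*" using bu uw by (rule rtrancl_into_rtrancl)
    have kk: "k - 1 < k" using k1 by simp
    show "w \<in> G \<and> (u + \<delta>, w + \<delta>) \<in> E"
    proof (cases "a' + w \<in> R")
      case True
      then have a'wP: "a' + w \<in> Phi" using Phicl a'P wP by auto
      have eq: "(a' + w) - (a' + u) = g" using we by (simp add: algebra_simps)
      have "a' + u \<in> Phi" using xP a'u by simp
      moreover have "gF ((a' + w) - (a' + u))" using g eq by simp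
      ultimately have "(a' + u, a' + w) \<in> E" using edge' a'wP by blast
      then have "(a + b, a' + w) \<in> E\<^sup>*" using xu by (rule rt_step)
      then have "Cfg a' w v" unfolding Cfg_def using aa' bw bv yv by simp
      then show ?thesis using kmin[OF kk] wv' by blast
    next
      case False
      have "w + -g \<in> R \<and> True" using uP PhiR we by simp
      have "w + a' \<in> R \<or> -g + a' \<in> R"
      proof (rule P1)
        show "w \<in> R" "a' \<in> R" using wP a'P PhiR by auto
        show "-g \<in> R" using g gFR negR by auto
        show "w + - g \<in> R" using uP PhiR we by simp
        show "w + - g + a' \<in> R" using xP PhiR a'u we by (simp add: algebra_simps)
        show "w + a' \<noteq> 0" using Phi_sum_nz[OF wP a'P] .
        show "- g + a' \<noteq> 0" using gF_neq[OF g a'P] by (auto simp: add_eq_0_iff)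
      qed
      then have r: "a' + -g \<in> R" using False by (auto simp: add.commute)
      have "a' + -g \<in> Phi"
      proof (rule ccontr)
        assume "a' + -g \<notin> Phi"
        then have "gF (a' + -g)" using sgn_add[OF a'P _ r] g by simp
        moreover have "w - x = -(a' + -g)" using a'u we by (simp add: algebra_simps)
        ultimately have "gF (w - x)" by (metis gF_neg)
        then have "(x, w) \<in> E" using edge'[OF xP wP] by simp
        then have "(a + b, w) \<in> E\<^sup>*" using xu a'u by (metis rtrancl_into_rtrancl)
        then have "(a + b, b) \<in> E\<^sup>*" using rt_sym[OF bw] by (rule rtrancl_trans)
        then show False using n2 by simp
      qed
      define a'' where "a'' = a' + -g"
      have a''P: "a'' \<in> Phi" using \<open>a' + -g \<in> Phi\<close> unfolding a''_def .
      have ea: "(a', a'') \<in> E" unfolding a''_def by (rule edge[OF a'P \<open>a' + -g \<in> Phi\<close>]) (simp add: g)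
      have aa'': "(a, a'') \<in> E\<^sup>*" using aa' ea by (rule rtrancl_into_rtrancl)
      have a''w: "a'' + w = x" unfolding a''_def using a'u we by (simp add: algebra_simps)
      have "a'' + v \<in> R \<or> g + v \<in> R"
      proof (rule P1)
        show "a'' \<in> R" "v \<in> R" using a''P vP PhiR by auto
        show "g \<in> R" using g gFR by auto
        show "a'' + g \<in> R" using a'P PhiR unfolding a''_def by simp
        show "a'' + g + v \<in> R" using yP PhiR unfolding a''_def by simp
        show "a'' + v \<noteq> 0" using Phi_sum_nz[OF a''P vP] .
        show "g + v \<noteq> 0" using gF_neq[OF g vP] by (auto simp: add_eq_0_iff)
      qed
      then show ?thesis
      proof
        assume r2: "a'' + v \<in> R"
        then have a''vP: "a'' + v \<in> Phi" using Phicl a''P vP by auto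
        have "(a' + v, a'' + v) \<in> E" using edge'[OF yP a''vP] g unfolding a''_def
          by (simp add: algebra_simps)
        then have "(a + b', a'' + v) \<in> E\<^sup>*" using yv by (rule rt_step)
        moreover have "(a + b, a'' + w) \<in> E\<^sup>*" using xu a'u a''w by simp
        ultimately have "Cfg a'' w v" unfolding Cfg_def using aa'' bw bv by simp
        then show ?thesis using kmin[OF kk] wv' by blast
      next
        assume r2: "g + v \<in> R"
        then have r2': "v + g \<in> R" by (simp add: add.commute)
        have "v + g \<in> Phi"
        proof (rule ccontr)
          assume "v + g \<notin> Phi"
          then have "gF (v + g)" using sgn_add[OF vP g r2'] by simp
          moreover have "a'' - (a' + v) = -(v + g)" unfolding a''_def by (simp add: algebra_simps)
          ultimately have "gF (a'' - (a' + v))" by (metis gF_neg)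
          then have "(a' + v, a'') \<in> E" using edge'[OF yP a''P] by simp
          then have "(a + b', a'') \<in> E\<^sup>*" using yv by (rule rt_step)
          then have "(a + b', a) \<in> E\<^sup>*" using rt_sym[OF aa''] by (rule rtrancl_trans)
          then show False using n3 by simp
        qed
        then have evg: "(v, v + g) \<in> E" using edge[OF vP _ g] by simp
        have wd: "w + \<delta> = v + g" unfolding v_def using we by (simp add: algebra_simps)
        have xw: "x - w = a''" using a''w by (simp add: algebra_simps)
        have "(b, v + g) \<in> E\<^sup>*" using bv evg by (rule rtrancl_into_rtrancl)
        moreover have "(a + b, a'' + w) \<in> E\<^sup>*" using xu a'u a''w by simp
        moreover have eqn: "a'' + (v + g) = a' + v" unfolding a''_def by (simp add: algebra_simps)
        have "(a + b', a'' + (v + g)) \<in> E\<^sup>*" unfolding eqn by (rule yv)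
        ultimately have "Cfg (x - w) w (w + \<delta>)" unfolding Cfg_def xw wd using aa'' bw yv by simp
        moreover have "(w, w + \<delta>) \<in> E ^^ k"
        proof -
          have "(w, v + g) \<in> E ^^ Suc (k - 1)" using wv' evg by (rule relpow_Suc_I)
          then show ?thesis using k1 wd by simp
        qed
        ultimately have "w \<in> G" unfolding G_def by simp
        moreover have "(u + \<delta>, w + \<delta>) \<in> E" using evg unfolding wd v_def .
        ultimately show ?thesis by simp
      qed
    qed
  qed
  then show False using u0G by simp
qed


lemma sign4: "z \<in> R \<Longrightarrow> z \<in> Phi \<or> gF z \<or> -z \<in> Phi"
  using Psplit unfolding gF_def by blast

lemma DLf:
  assumes a: "a \<in> Phi" and u: "u \<in> Phi" and uv: "(u, v) \<in> E\<^sup>*" and ua: "u - a \<in> Phi" and va: "v - a \<in> Phi"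
    and n1: "(u - a, v - a) \<notin> E\<^sup>*" and n2: "(u, a) \<notin> E\<^sup>*" and n3: "(u, u - a) \<notin> E\<^sup>*"
  shows False
proof -
  define Cfg where "Cfg a1 u1 v1 \<longleftrightarrow> (a, a1) \<in> E\<^sup>* \<and> (u, u1) \<in> E\<^sup>* \<and> (u, v1) \<in> E\<^sup>*
      \<and> (u - a, u1 - a1) \<in> E\<^sup>* \<and> (v - a, v1 - a1) \<in> E\<^sup>*" for a1 u1 v1
  obtain n0 where "(u, v) \<in> E ^^ n0" using uv rtrancl_power by blast
  define Q where "Q n \<longleftrightarrow> (\<exists>a1 u1 v1. Cfg a1 u1 v1 \<and> (u1, v1) \<in> E ^^ n)" for n
  have "\<exists>n. Q n" using uv \<open>(u, v) \<in> E ^^ n0\<close> unfolding Cfg_def Q_def by blast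
  define k where "k = (LEAST n. Q n)"
  have "Q k" unfolding k_def using \<open>\<exists>n. Q n\<close> by (rule LeastI_ex)
  then have kex: "\<exists>a1 u1 v1. Cfg a1 u1 v1 \<and> (u1, v1) \<in> E ^^ k" unfolding Q_def .
  have kmin: "\<not> (\<exists>a1 u1 v1. Cfg a1 u1 v1 \<and> (u1, v1) \<in> E ^^ n)" if "n < k" for n
    using not_less_Least[OF that[unfolded k_def]] unfolding Q_def .
  from kex obtain a1 u0 v0 where c0: "Cfg a1 u0 v0" and k0: "(u0, v0) \<in> E ^^ k" by blast
  define b0 where "b0 = u0 - a1"
  define \<delta> where "\<delta> = v0 - u0"
  define G where "G = {w. Cfg (w - b0) w (w + \<delta>) \<and> (w, w + \<delta>) \<in> E ^^ k}"
  have u0G: "u0 \<in> G" unfolding G_def b0_def \<delta>_def using c0 k0 by simp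
  have "G \<subseteq> Phi" unfolding G_def Cfg_def using rt_Phi u by blast
  then have finG: "finite G" using finPhi by (rule finite_subset)
  have dnz: "\<delta> \<noteq> 0"
  proof
    assume "\<delta> = 0"
    then have "v0 = u0" unfolding \<delta>_def by simp
    then have "(u - a, u0 - a1) \<in> E\<^sup>*" "(v - a, u0 - a1) \<in> E\<^sup>*" using c0 unfolding Cfg_def by auto
    then have "(u - a, v - a) \<in> E\<^sup>*" using rt_sym by (meson rtrancl_trans)
    then show False using n1 by simp
  qed
  have "G = {}"
  proof (rule GTP[OF finG dnz])
    show "\<And>u. u \<in> G \<Longrightarrow> (u, u + \<delta>) \<in> E ^^ k" unfolding G_def by simp
  next
    fix u1 w assume uG: "u1 \<in> G" and uw: "(u1, w) \<in> E" and wv: "(w, u1 + \<delta>) \<in> E ^^ (k - 1)"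
    define a' where "a' = u1 - b0"
    define v1 where "v1 = u1 + \<delta>"
    define g where "g = w - u1"
    define c0 where "c0 = v1 - a'"
    have cu: "Cfg a' u1 v1" and uv1: "(u1, v1) \<in> E ^^ k" using uG unfolding G_def a'_def v1_def by auto
    have k1: "k \<noteq> 0"
    proof
      assume "k = 0"
      then have "u1 = v1" using uv1 by simp
      then show False using dnz unfolding v1_def by simp
    qed
    have wv': "(w, v1) \<in> E ^^ (k - 1)" using wv unfolding v1_def .
    have g: "gF g" and u1P: "u1 \<in> Phi" and wP: "w \<in> Phi" using uw unfolding E_iff g_def by auto
    have we: "w = u1 + g" unfolding g_def by simp
    have aa': "(a, a') \<in> E\<^sup>*" and uu1: "(u, u1) \<in> E\<^sup>*" and uv1': "(u, v1) \<in> E\<^sup>*"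
      and ub: "(u - a, u1 - a') \<in> E\<^sup>*" and vc: "(v - a, v1 - a') \<in> E\<^sup>*" using cu unfolding Cfg_def by auto
    have u1a': "u1 - a' = b0" unfolding a'_def by simp
    have ub0: "(u - a, b0) \<in> E\<^sup>*" using ub u1a' by simp
    have vc0: "(v - a, c0) \<in> E\<^sup>*" using vc unfolding c0_def .
    have a'P: "a' \<in> Phi" using rt_Phi[OF aa' a] .
    have v1P: "v1 \<in> Phi" using rt_Phi[OF uv1' u] .
    have b0P: "b0 \<in> Phi" using rt_Phi[OF ub0 ua] .
    have c0P: "c0 \<in> Phi" using rt_Phi[OF vc0 va] .
    have uw': "(u, w) \<in> E\<^sup>*" using uw uu1 by (rule rt_step)
    have kk: "k - 1 < k" using k1 by simp
    have nota: "(w, a') \<notin> E\<^sup>*"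
    proof
      assume "(w, a') \<in> E\<^sup>*"
      then have "(u, a') \<in> E\<^sup>*" using uw' by (meson rtrancl_trans)
      then have "(u, a) \<in> E\<^sup>*" using rt_sym[OF aa'] by (meson rtrancl_trans)
      then show False using n2 by simp
    qed
    show "w \<in> G \<and> (u1 + \<delta>, w + \<delta>) \<in> E"
    proof (cases "w - a' \<in> R")
      case True
      from sign4[OF True] show ?thesis
      proof (elim disjE)
        assume wa: "w - a' \<in> Phi"
        have "gF ((w - a') - b0)" using g we u1a' by (simp add: algebra_simps)
        then have "(b0, w - a') \<in> E" using edge'[OF b0P wa] by simp
        then have "(u - a, w - a') \<in> E\<^sup>*" using ub0 by (rule rt_step)
        then have "Cfg a' w v1" unfolding Cfg_def using aa' uw' uv1' vc by simp
        then show ?thesis using kmin[OF kk] wv' by blast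
      next
        assume "gF (w - a')"
        then have "(a', w) \<in> E" using edge'[OF a'P wP] by simp
        then have "(w, a') \<in> E\<^sup>*" using E_sym by blast
        then show ?thesis using nota by simp
      next
        assume na: "-(w - a') \<in> Phi"
        have "b0 + -(w - a') = -g" using u1a' we by (simp add: algebra_simps)
        moreover have "-g \<in> R" using g gFR negR by auto
        ultimately have "-g \<in> Phi" using Phicl[OF b0P na] by simp
        then show ?thesis using gF_notPhi[of "-g"] g by simp
      qed
    next
      case False
      have wna: "w \<noteq> a'" using nota by auto
      have "w + -a' \<in> R \<or> -g + -a' \<in> R"
      proof (rule P1)
        show "w \<in> R" using wP PhiR by auto
        show "-g \<in> R" using g gFR negR by auto
        show "-a' \<in> R" using a'P PhiR negR by auto
        show "w + - g \<in> R" using u1P PhiR we by simp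
        show "w + - g + - a' \<in> R" using b0P PhiR u1a' we by (simp add: algebra_simps)
        show "w + - a' \<noteq> 0" using wna by (simp add: add_eq_0_iff)
        show "- g + - a' \<noteq> 0" using gF_neq[OF g a'P] by (auto simp: add_eq_0_iff)
      qed
      then have "-g + -a' \<in> R" using False by simp
      then have r: "a' + g \<in> R" using negR[of "-g + -a'"] by (simp add: algebra_simps)
      have "a' + g \<in> Phi"
      proof (rule ccontr)
        assume "a' + g \<notin> Phi"
        then have "gF (a' + g)" using sgn_add[OF a'P g r] by simp
        moreover have "w - b0 = a' + g" using u1a' we by (simp add: algebra_simps)
        ultimately have "(b0, w) \<in> E" using edge'[OF b0P wP] by simp
        then have "(u - a, w) \<in> E\<^sup>*" using ub0 by (rule rt_step)
        then have "(u, u - a) \<in> E\<^sup>*" using uw' rt_sym by (meson rtrancl_trans)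
        then show False using n3 by simp
      qed
      define a'' where "a'' = a' + g"
      have a''P: "a'' \<in> Phi" using \<open>a' + g \<in> Phi\<close> unfolding a''_def .
      have ea: "(a', a'') \<in> E" unfolding a''_def by (rule edge[OF a'P \<open>a' + g \<in> Phi\<close> g])
      have aa'': "(a, a'') \<in> E\<^sup>*" using ea aa' by (rule rt_step)
      have wa'': "w - a'' = b0" unfolding a''_def using u1a' we by (simp add: algebra_simps)
      have v1na: "v1 \<noteq> a''"
      proof
        assume "v1 = a''"
        then have "(u, a'') \<in> E\<^sup>*" using uv1' by simp
        then have "(u, a) \<in> E\<^sup>*" using rt_sym[OF aa''] by (meson rtrancl_trans)
        then show False using n2 by simp
      qed
      have "-a'' + v1 \<in> R \<or> g + v1 \<in> R"
      proof (rule P1)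
        show "-a'' \<in> R" using a''P PhiR negR by auto
        show "g \<in> R" using g gFR by auto
        show "v1 \<in> R" using v1P PhiR by auto
        show "-a'' + g \<in> R" using a'P PhiR negR unfolding a''_def by (simp add: algebra_simps)
        show "-a'' + g + v1 \<in> R" using c0P PhiR unfolding a''_def c0_def by (simp add: algebra_simps)
        show "-a'' + v1 \<noteq> 0" using v1na by (auto simp: add_eq_0_iff)
        show "g + v1 \<noteq> 0" using gF_neq[OF g v1P] by (auto simp: add_eq_0_iff)
      qed
      then show ?thesis
      proof
        assume "-a'' + v1 \<in> R"
        then have r2: "v1 - a'' \<in> R" by (simp add: algebra_simps)
        from sign4[OF r2] show ?thesis
        proof (elim disjE)
          assume z: "v1 - a'' \<in> Phi"
          have "gF ((v1 - a'') - c0)" using g unfolding c0_def a''_def by (simp add: algebra_simps)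
          then have "(c0, v1 - a'') \<in> E" using edge'[OF c0P z] by simp
          then have "(v - a, v1 - a'') \<in> E\<^sup>*" using vc0 by (rule rt_step)
          moreover have "(u - a, w - a'') \<in> E\<^sup>*" using ub0 wa'' by simp
          ultimately have "Cfg a'' w v1" unfolding Cfg_def using aa'' uw' uv1' by simp
          then show ?thesis using kmin[OF kk] wv' by blast
        next
          assume "gF (v1 - a'')"
          then have "(a'', v1) \<in> E" using edge'[OF a''P v1P] by simp
          then have "(a, v1) \<in> E\<^sup>*" using aa'' by (rule rt_step)
          then have "(u, a) \<in> E\<^sup>*" using uv1' rt_sym by (meson rtrancl_trans)
          then show ?thesis using n2 by simp
        next
          assume z: "-(v1 - a'') \<in> Phi"
          have "c0 + -(v1 - a'') = g" unfolding c0_def a''_def by (simp add: algebra_simps)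
          then have "g \<in> Phi" using Phicl[OF c0P z] g gFR by metis
          then show ?thesis using gF_notPhi g by simp
        qed
      next
        assume "g + v1 \<in> R"
        moreover have "g + v1 = c0 + a''" unfolding c0_def a''_def by (simp add: algebra_simps)
        ultimately have "c0 + a'' \<in> R" by simp
        then have "c0 + a'' \<in> Phi" using Phicl c0P a''P by blast
        moreover have vg: "v1 + g = c0 + a''" unfolding c0_def a''_def by (simp add: algebra_simps)
        ultimately have vgP: "v1 + g \<in> Phi" by simp
        then have evg: "(v1, v1 + g) \<in> E" using edge[OF v1P _ g] by simp
        have wd: "w + \<delta> = v1 + g" unfolding v1_def using we by (simp add: algebra_simps)
        have wb: "w - b0 = a''" using wa'' by (simp add: algebra_simps)
        have "(u, v1 + g) \<in> E\<^sup>*" using evg uv1' by (rule rt_step)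
        moreover have "(u - a, w - a'') \<in> E\<^sup>*" using ub0 wa'' by simp
        moreover have eqn: "(v1 + g) - a'' = c0" unfolding c0_def a''_def by (simp add: algebra_simps)
        have "(v - a, (v1 + g) - a'') \<in> E\<^sup>*" unfolding eqn by (rule vc0)
        ultimately have "Cfg (w - b0) w (w + \<delta>)" unfolding Cfg_def wb wd using aa'' uw' by simp
        moreover have "(w, w + \<delta>) \<in> E ^^ k"
        proof -
          have "(w, v1 + g) \<in> E ^^ Suc (k - 1)" using wv' evg by (rule relpow_Suc_I)
          then show ?thesis using k1 wd by simp
        qed
        ultimately have "w \<in> G" unfolding G_def by simp
        moreover have "(u1 + \<delta>, w + \<delta>) \<in> E" using evg unfolding wd v1_def .
        ultimately show ?thesis by simp
      qed
    qed
  qed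
  then show False using u0G by simp
qed


lemma DL:
  assumes a: "a \<in> Phi" and u: "u \<in> Phi" and uv: "(u, v) \<in> E\<^sup>*" and ua: "u - a \<in> Phi" and va: "v - a \<in> Phi"
    and n2: "(u, a) \<notin> E\<^sup>*"
  shows "(u - a, v - a) \<in> E\<^sup>*"
proof (rule ccontr)
  assume n1: "(u - a, v - a) \<notin> E\<^sup>*"
  have h1: "(u, u - a) \<in> E\<^sup>*" using DLf[OF a u uv ua va n1 n2] by blast
  have vP: "v \<in> Phi" using rt_Phi[OF uv u] .
  have vu: "(v, u) \<in> E\<^sup>*" using rt_sym[OF uv] .
  have n2': "(v, a) \<notin> E\<^sup>*"
  proof
    assume "(v, a) \<in> E\<^sup>*"
    with uv have "(u, a) \<in> E\<^sup>*" by (rule rtrancl_trans)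
    with n2 show False by simp
  qed
  have n1': "(v - a, u - a) \<notin> E\<^sup>*"
  proof
    assume "(v - a, u - a) \<in> E\<^sup>*"
    then have "(u - a, v - a) \<in> E\<^sup>*" by (rule rt_sym)
    with n1 show False by simp
  qed
  have h2: "(v, v - a) \<in> E\<^sup>*" using DLf[OF a vP vu va ua n1' n2'] by blast
  have "(u - a, u) \<in> E\<^sup>*" using rt_sym[OF h1] .
  then have "(u - a, v) \<in> E\<^sup>*" using uv by (rule rtrancl_trans)
  then have "(u - a, v - a) \<in> E\<^sup>*" using h2 by (rule rtrancl_trans)
  then show False using n1 by simp
qed

lemma SL1:
  assumes a: "a \<in> Phi" and c: "c \<in> Phi" and aa: "(a, a') \<in> E\<^sup>*" and cc: "(c, c') \<in> E\<^sup>*"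
    and ac: "a + c \<in> R" and ac': "a' + c' \<in> R" and nac: "(a, c) \<notin> E\<^sup>*" and nsa: "(a + c, a) \<notin> E\<^sup>*"
  shows "(a + c, a' + c') \<in> E\<^sup>*"
proof (rule ccontr)
  assume nxy: "(a + c, a' + c') \<notin> E\<^sup>*"
  obtain cs where ccs: "(c, cs) \<in> E\<^sup>*" and r: "a' + cs \<in> R" and xs: "(a + c, a' + cs) \<in> E\<^sup>*"
    using TR[OF a c ac aa nsa] by blast
  have a'P: "a' \<in> Phi" using rt_Phi[OF aa a] .
  have csP: "cs \<in> Phi" using rt_Phi[OF ccs c] .
  have csc': "(cs, c') \<in> E\<^sup>*" using rt_sym[OF ccs] cc by (rule rtrancl_trans)
  have c'cs: "(c', cs) \<in> E\<^sup>*" using rt_sym[OF csc'] .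
  have c'P: "c' \<in> Phi" using rt_Phi[OF cc c] .
  have m1: "(a' + cs, a' + c') \<notin> E\<^sup>*"
  proof
    assume "(a' + cs, a' + c') \<in> E\<^sup>*"
    with xs have "(a + c, a' + c') \<in> E\<^sup>*" by (rule rtrancl_trans)
    with nxy show False by simp
  qed
  have m1': "(a' + c', a' + cs) \<notin> E\<^sup>*"
  proof
    assume "(a' + c', a' + cs) \<in> E\<^sup>*"
    then have "(a' + cs, a' + c') \<in> E\<^sup>*" by (rule rt_sym)
    with m1 show False by simp
  qed
  have d1: "(a' + cs, cs) \<in> E\<^sup>* \<or> (a' + c', a') \<in> E\<^sup>*"
    using SLf[OF a'P csP csc' r ac' m1] by blast
  have d2: "(a' + c', c') \<in> E\<^sup>* \<or> (a' + cs, a') \<in> E\<^sup>*"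
    using SLf[OF a'P c'P c'cs ac' r m1'] by blast
  have "(a' + cs, a') \<notin> E\<^sup>*"
  proof
    assume "(a' + cs, a') \<in> E\<^sup>*"
    then have "(a + c, a') \<in> E\<^sup>*" using xs by (meson rtrancl_trans)
    then have "(a + c, a) \<in> E\<^sup>*" using rt_sym[OF aa] by (meson rtrancl_trans)
    then show False using nsa by simp
  qed
  with d2 have yc: "(a' + c', c') \<in> E\<^sup>*" by simp
  from d1 show False
  proof
    assume "(a' + cs, cs) \<in> E\<^sup>*"
    then have "(a + c, cs) \<in> E\<^sup>*" using xs by (meson rtrancl_trans)
    then have "(a + c, c') \<in> E\<^sup>*" using csc' by (meson rtrancl_trans)
    then have "(a + c, a' + c') \<in> E\<^sup>*" using rt_sym[OF yc] by (meson rtrancl_trans)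
    then show False using nxy by simp
  next
    assume "(a' + c', a') \<in> E\<^sup>*"
    then have "(a', c') \<in> E\<^sup>*" using yc rt_sym by (meson rtrancl_trans)
    then have "(a, c') \<in> E\<^sup>*" using aa by (meson rtrancl_trans)
    then have "(a, c) \<in> E\<^sup>*" using rt_sym[OF cc] by (meson rtrancl_trans)
    then show False using nac by simp
  qed
qed

lemma SL:
  assumes a: "a \<in> Phi" and c: "c \<in> Phi" and aa: "(a, a') \<in> E\<^sup>*" and cc: "(c, c') \<in> E\<^sup>*"
    and ac: "a + c \<in> R" and ac': "a' + c' \<in> R" and nac: "(a, c) \<notin> E\<^sup>*"
  shows "(a + c, a' + c') \<in> E\<^sup>*"
proof (cases "(a + c, a) \<in> E\<^sup>*")
  case False
  then show ?thesis using SL1[OF a c aa cc ac ac' nac] by simp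
next
  case True
  show ?thesis
  proof (cases "(a' + c', a') \<in> E\<^sup>*")
    case True2: True
    have "(a + c, a') \<in> E\<^sup>*" using True aa by (rule rtrancl_trans)
    then show ?thesis using rt_sym[OF True2] by (rule rtrancl_trans)
  next
    case False
    have a'P: "a' \<in> Phi" using rt_Phi[OF aa a] .
    have c'P: "c' \<in> Phi" using rt_Phi[OF cc c] .
    have "(a', c') \<notin> E\<^sup>*"
    proof
      assume "(a', c') \<in> E\<^sup>*"
      with aa have "(a, c') \<in> E\<^sup>*" by (rule rtrancl_trans)
      then have "(a, c) \<in> E\<^sup>*" using rt_sym[OF cc] by (rule rtrancl_trans)
      with nac show False by simp
    qed
    then have "(a' + c', a + c) \<in> E\<^sup>*" using SL1[OF a'P c'P rt_sym[OF aa] rt_sym[OF cc] ac' ac _ False] by simp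
    then show ?thesis by (rule rt_sym)
  qed
qed

abbreviation "K \<equiv> components P Phi"

lemma K_cases: "X \<in> K \<Longrightarrow> \<exists>x\<in>Phi. X = E\<^sup>* `` {x}"
  unfolding components_def quotient_def by blast

lemma cmpK: "x \<in> Phi \<Longrightarrow> E\<^sup>* `` {x} \<in> K"
  unfolding components_def quotient_def by blast

lemma K_Phi: "X \<in> K \<Longrightarrow> y \<in> X \<Longrightarrow> y \<in> Phi"
  using K_cases rt_Phi by blast

lemma K_rel: assumes "X \<in> K" "y \<in> X" "z \<in> X" shows "(y, z) \<in> E\<^sup>*"
proof -
  obtain x where X: "X = E\<^sup>* `` {x}" using K_cases[OF assms(1)] by blast
  have "(x, y) \<in> E\<^sup>*" "(x, z) \<in> E\<^sup>*" using assms(2,3) X by auto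
  then show ?thesis using rt_sym rtrancl_trans by metis
qed

lemma K_mem: assumes "X \<in> K" "y \<in> X" "(y, z) \<in> E\<^sup>*" shows "z \<in> X"
proof -
  obtain x where X: "X = E\<^sup>* `` {x}" using K_cases[OF assms(1)] by blast
  have "(x, y) \<in> E\<^sup>*" using assms(2) X by auto
  then have "(x, z) \<in> E\<^sup>*" using assms(3) by (rule rtrancl_trans)
  then show ?thesis using X by auto
qed

lemma K_disj: "X \<in> K \<Longrightarrow> Y \<in> K \<Longrightarrow> y \<in> X \<Longrightarrow> y \<in> Y \<Longrightarrow> X = Y"
proof -
  assume X: "X \<in> K" and Y: "Y \<in> K" and yX: "y \<in> X" and yY: "y \<in> Y"
  show "X = Y"
  proof
    show "X \<subseteq> Y" using K_rel[OF X yX] K_mem[OF Y yY] by blast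
    show "Y \<subseteq> X" using K_rel[OF Y yY] K_mem[OF X yX] by blast
  qed
qed

lemma CA_comm: "comp_add R P Phi X Y = comp_add R P Phi Y X"
proof -
  have "comp_sumset R X Y = comp_sumset R Y X"
    unfolding comp_sumset_def by (auto; metis add.commute)
  then show ?thesis unfolding comp_add_def Let_def by (cases "X = Y") auto
qed

lemma CA_some:
  assumes XK: "X \<in> K" and YK: "Y \<in> K" and ca: "comp_add R P Phi X Y = Some W"
  shows "W \<in> K \<and> (\<exists>x\<in>X. \<exists>y\<in>Y. x + y \<in> R \<and> x + y \<in> W) \<and> (comp_sumset R X Y \<subseteq> W \<or> (X = Y \<and> W \<noteq> X))"
proof -
  define Z where "Z = comp_sumset R X Y"
  have Zd: "z \<in> Z \<longleftrightarrow> (\<exists>x\<in>X. \<exists>y\<in>Y. z = x + y) \<and> z \<in> R" for z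
    unfolding Z_def comp_sumset_def by blast
  define P2 where "P2 C \<longleftrightarrow> C \<in> K \<and> C \<noteq> X \<and> Z \<subseteq> X \<union> C \<and> Z \<inter> X \<noteq> {} \<and> Z \<inter> C \<noteq> {}" for C
  have def: "comp_add R P Phi X Y = (if Z = {} then None else if (\<exists>C\<in>K. Z \<subseteq> C)
      then Some (THE C. C \<in> K \<and> Z \<subseteq> C) else if X = Y \<and> (\<exists>C. P2 C) then Some (THE C. P2 C) else None)"
    unfolding comp_add_def Let_def Z_def[symmetric] P2_def by (simp only: Bex_def conj_assoc)
  have Zne: "Z \<noteq> {}"
  proof
    assume "Z = {}"
    then have "comp_add R P Phi X Y = None" unfolding def by simp
    then show False using ca by simp
  qed
  show ?thesis
  proof (cases "\<exists>C\<in>K. Z \<subseteq> C")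
    case True
    then have "comp_add R P Phi X Y = Some (THE C. C \<in> K \<and> Z \<subseteq> C)" unfolding def using Zne by simp
    then have W: "W = (THE C. C \<in> K \<and> Z \<subseteq> C)" using ca by simp
    obtain C where C: "C \<in> K" "Z \<subseteq> C" using True by blast
    obtain z where z: "z \<in> Z" using Zne by blast
    have uniq: "C' = C" if "C' \<in> K \<and> Z \<subseteq> C'" for C'
      using K_disj[of C' C z] that C z by blast
    have "W = C" unfolding W
    proof (rule the_equality)
      show "C \<in> K \<and> Z \<subseteq> C" using C by simp
    qed (rule uniq)
    moreover obtain x y where "x \<in> X" "y \<in> Y" "z = x + y" "z \<in> R" using z Zd by blast
    ultimately show ?thesis using C z unfolding Z_def[symmetric] by blast
  next
    case False
    have c2: "X = Y \<and> (\<exists>C. P2 C)"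
    proof (rule ccontr)
      assume "\<not> (X = Y \<and> (\<exists>C. P2 C))"
      then have "comp_add R P Phi X Y = None" unfolding def using Zne False by simp
      then show False using ca by simp
    qed
    then have "comp_add R P Phi X Y = Some (THE C. P2 C)" unfolding def using Zne False by simp
    then have W: "W = (THE C. P2 C)" using ca by simp
    obtain C where C: "P2 C" using c2 by blast
    have uniq: "C' = C" if h: "P2 C'" for C'
    proof -
      obtain z where z: "z \<in> Z" "z \<in> C'" using h unfolding P2_def by blast
      have "z \<notin> X"
      proof
        assume "z \<in> X"
        then have "C' = X" using K_disj[of C' X z] h XK z unfolding P2_def by blast
        then show False using h unfolding P2_def by blast
      qed
      then have "z \<in> C" using z C unfolding P2_def by blast
      then show ?thesis using K_disj[of C' C z] that C z unfolding P2_def by blast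
    qed
    have "W = C" unfolding W
    proof (rule the_equality)
      show "P2 C" by (rule C)
    qed (rule uniq)
    moreover obtain z where z: "z \<in> Z" "z \<in> C" using C unfolding P2_def by blast
    moreover obtain x y where "x \<in> X" "y \<in> Y" "z = x + y" "z \<in> R" using z Zd by blast
    ultimately show ?thesis using C c2 unfolding P2_def by blast
  qed
qed

lemma CA_intro:
  assumes WK: "W \<in> K" and ne: "comp_sumset R X Y \<noteq> {}" and sub: "comp_sumset R X Y \<subseteq> W"
  shows "comp_add R P Phi X Y = Some W"
proof -
  define Z where "Z = comp_sumset R X Y"
  have ex: "\<exists>C\<in>K. Z \<subseteq> C" using WK sub unfolding Z_def by blast
  obtain z where z: "z \<in> Z" using ne unfolding Z_def by blast
  have "(THE C. C \<in> K \<and> Z \<subseteq> C) = W"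
  proof (rule the_equality)
    show "W \<in> K \<and> Z \<subseteq> W" using WK sub unfolding Z_def by simp
    fix C assume "C \<in> K \<and> Z \<subseteq> C"
    then show "C = W" using K_disj[of C W z] WK sub z unfolding Z_def by blast
  qed
  then show ?thesis unfolding comp_add_def Let_def Z_def[symmetric] using ne ex unfolding Z_def by simp
qed

lemma main_i:
  assumes AK: "A \<in> K" and BK: "B \<in> K" and CK: "C \<in> K"
    and ab: "comp_add R P Phi A B = Some D" and ac: "comp_add R P Phi A C = Some D" and DA: "D \<noteq> A"
  shows "B = C"
proof -
  obtain a b where a: "a \<in> A" and b: "b \<in> B" and abR: "a + b \<in> R" and abD: "a + b \<in> D" and DK: "D \<in> K"
    using CA_some[OF AK BK ab] by blast
  obtain a' c where a': "a' \<in> A" and c: "c \<in> C" and acR: "a' + c \<in> R" and acD: "a' + c \<in> D"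
    using CA_some[OF AK CK ac] by blast
  have aP: "a \<in> Phi" using K_Phi[OF AK a] .
  have a'P: "a' \<in> Phi" using K_Phi[OF AK a'] .
  have bP: "b \<in> Phi" using K_Phi[OF BK b] .
  have cP: "c \<in> Phi" using K_Phi[OF CK c] .
  have ns: "(a' + c, a') \<notin> E\<^sup>*"
  proof
    assume "(a' + c, a') \<in> E\<^sup>*"
    then have "a' \<in> D" using K_mem[OF DK acD] by blast
    then show False using K_disj[OF AK DK a'] DA by simp
  qed
  obtain cs where ccs: "(c, cs) \<in> E\<^sup>*" and r: "a + cs \<in> R" and xs: "(a' + c, a + cs) \<in> E\<^sup>*"
    using TR[OF a'P cP acR K_rel[OF AK a' a] ns] by blast
  have csD: "a + cs \<in> D" using K_mem[OF DK acD xs] .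
  have csP: "cs \<in> Phi" using rt_Phi[OF ccs cP] .
  have abP: "a + b \<in> Phi" using K_Phi[OF DK abD] .
  have na: "(a + b, a) \<notin> E\<^sup>*"
  proof
    assume "(a + b, a) \<in> E\<^sup>*"
    then have "a \<in> D" using K_mem[OF DK abD] by blast
    then show False using K_disj[OF AK DK a] DA by simp
  qed
  have "((a + b) - a, (a + cs) - a) \<in> E\<^sup>*"
    using DL[OF aP abP K_rel[OF DK abD csD] _ _ na] bP csP by simp
  then have "(b, cs) \<in> E\<^sup>*" by simp
  then have "cs \<in> B" using K_mem[OF BK b] by blast
  moreover have "cs \<in> C" using K_mem[OF CK c ccs] .
  ultimately show ?thesis using K_disj[OF BK CK] by blast
qed

lemma ii_half:
  assumes AK: "A \<in> K" and BK: "B \<in> K" and CK: "C \<in> K" and DK: "D \<in> K"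
    and DA: "D \<noteq> A" and DB: "D \<noteq> B"
    and p: "p \<in> A" and q: "q \<in> B" and c0: "c0 \<in> C"
    and pqD: "p + q \<in> D" and pqcD: "p + q + c0 \<in> D" and pc: "p + c0 \<in> R"
  shows "comp_add R P Phi A C = Some A"
proof -
  have pP: "p \<in> Phi" using K_Phi[OF AK p] .
  have qP: "q \<in> Phi" using K_Phi[OF BK q] .
  have cP: "c0 \<in> Phi" using K_Phi[OF CK c0] .
  have pqP: "p + q \<in> Phi" using K_Phi[OF DK pqD] .
  have pcP: "p + c0 \<in> Phi" using Phicl[OF pP cP pc] .
  have nq: "(p + q, q) \<notin> E\<^sup>*"
  proof
    assume "(p + q, q) \<in> E\<^sup>*"
    then have "q \<in> D" using K_mem[OF DK pqD] by blast
    then show False using K_disj[OF BK DK q] DB by simp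
  qed
  have np: "(p + q, p) \<notin> E\<^sup>*"
  proof
    assume "(p + q, p) \<in> E\<^sup>*"
    then have "p \<in> D" using K_mem[OF DK pqD] by blast
    then show False using K_disj[OF AK DK p] DA by simp
  qed
  have e1: "(p + q) - q = p" by simp
  have e2: "(p + q + c0) - q = p + c0" by (simp add: algebra_simps)
  have "((p + q) - q, (p + q + c0) - q) \<in> E\<^sup>*"
    by (rule DL[OF qP pqP K_rel[OF DK pqD pqcD]]) (use e1 e2 pP pcP nq in simp_all)
  then have ppc: "(p, p + c0) \<in> E\<^sup>*" unfolding e1 e2 .
  then have pcA: "p + c0 \<in> A" using K_mem[OF AK p] by blast
  have AC: "A \<noteq> C"
  proof
    assume AC: "A = C"
    then have c0A: "c0 \<in> A" using c0 by simp
    obtain qs where qqs: "(q, qs) \<in> E\<^sup>*" and r: "c0 + qs \<in> R" and xs: "(p + q, c0 + qs) \<in> E\<^sup>*"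
      using TR[OF pP qP _ K_rel[OF AK p c0A] np] PhiR pqP by blast
    have uD: "c0 + qs \<in> D" using K_mem[OF DK pqD xs] .
    have uP: "c0 + qs \<in> Phi" using K_Phi[OF DK uD] .
    have qsP: "qs \<in> Phi" using rt_Phi[OF qqs qP] .
    have nu: "(c0 + qs, c0) \<notin> E\<^sup>*"
    proof
      assume "(c0 + qs, c0) \<in> E\<^sup>*"
      then have "c0 \<in> D" using K_mem[OF DK uD] by blast
      then show False using K_disj[OF AK DK c0A] DA by simp
    qed
    have f1: "(c0 + qs) - c0 = qs" by simp
    have f2: "(p + q + c0) - c0 = p + q" by simp
    have "((c0 + qs) - c0, (p + q + c0) - c0) \<in> E\<^sup>*"
      by (rule DL[OF cP uP K_rel[OF DK uD pqcD]]) (use f1 f2 qsP pqP nu in simp_all)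
    then have "(qs, p + q) \<in> E\<^sup>*" unfolding f1 f2 .
    then have "(q, p + q) \<in> E\<^sup>*" using qqs by (meson rtrancl_trans)
    then have "p + q \<in> B" using K_mem[OF BK q] by blast
    then show False using K_disj[OF BK DK _ pqD] DB by simp
  qed
  have npc: "(p, c0) \<notin> E\<^sup>*"
  proof
    assume "(p, c0) \<in> E\<^sup>*"
    then have "c0 \<in> A" using K_mem[OF AK p] by blast
    then show False using K_disj[OF AK CK _ c0] AC by simp
  qed
  show ?thesis
  proof (rule CA_intro[OF AK])
    show "comp_sumset R A C \<noteq> {}" using p c0 pc unfolding comp_sumset_def by blast
    show "comp_sumset R A C \<subseteq> A"
    proof
      fix z assume "z \<in> comp_sumset R A C"
      then obtain a1 c1 where a1: "a1 \<in> A" and c1: "c1 \<in> C" and z: "z = a1 + c1" and zR: "z \<in> R"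
        unfolding comp_sumset_def by blast
      have "(p + c0, a1 + c1) \<in> E\<^sup>*"
        using SL[OF pP cP K_rel[OF AK p a1] K_rel[OF CK c0 c1] pc _ npc] zR z by simp
      then show "z \<in> A" using K_mem[OF AK pcA] z by blast
    qed
  qed
qed

lemma main_ii:
  assumes AK: "A \<in> K" and BK: "B \<in> K" and CK: "C \<in> K"
    and ab: "comp_add R P Phi A B = Some D" and dc: "comp_add R P Phi D C = Some D"
  shows "comp_add R P Phi A C = Some A \<or> comp_add R P Phi B C = Some B"
proof (cases "D = A \<or> D = B")
  case True
  then show ?thesis using dc by auto
next
  case False
  then have DA: "D \<noteq> A" and DB: "D \<noteq> B" by auto
  obtain a b where a: "a \<in> A" and b: "b \<in> B" and abR: "a + b \<in> R" and abD: "a + b \<in> D" and DK: "D \<in> K"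
    using CA_some[OF AK BK ab] by blast
  have dcs: "comp_sumset R D C \<subseteq> D" and "\<exists>x\<in>D. \<exists>y\<in>C. x + y \<in> R \<and> x + y \<in> D"
    using CA_some[OF DK CK dc] by auto
  then obtain d0 c0 where d0: "d0 \<in> D" and c0: "c0 \<in> C" and dcR: "d0 + c0 \<in> R" and dcD: "d0 + c0 \<in> D"
    by blast
  have aP: "a \<in> Phi" using K_Phi[OF AK a] .
  have bP: "b \<in> Phi" using K_Phi[OF BK b] .
  have cP: "c0 \<in> Phi" using K_Phi[OF CK c0] .
  have na: "(a + b, a) \<notin> E\<^sup>*"
  proof
    assume "(a + b, a) \<in> E\<^sup>*"
    then have "a \<in> D" using K_mem[OF DK abD] by blast
    then show False using K_disj[OF AK DK a] DA by simp
  qed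
  have nb: "(a + b, b) \<notin> E\<^sup>*"
  proof
    assume "(a + b, b) \<in> E\<^sup>*"
    then have "b \<in> D" using K_mem[OF DK abD] by blast
    then show False using K_disj[OF BK DK b] DB by simp
  qed
  obtain p q where ap: "(a, p) \<in> E\<^sup>*" and bq: "(b, q) \<in> E\<^sup>*" and d0e: "d0 = p + q"
    using TS[OF aP bP abR K_rel[OF DK abD d0] na nb] by blast
  have p: "p \<in> A" using K_mem[OF AK a ap] .
  have q: "q \<in> B" using K_mem[OF BK b bq] .
  have pP: "p \<in> Phi" using K_Phi[OF AK p] .
  have qP: "q \<in> Phi" using K_Phi[OF BK q] .
  have "p + c0 \<in> R \<or> q + c0 \<in> R"
  proof (rule P1)
    show "p \<in> R" "q \<in> R" "c0 \<in> R" using pP qP cP PhiR by auto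
    show "p + q \<in> R" using dcR d0e d0 K_Phi[OF DK d0] PhiR by auto
    show "p + q + c0 \<in> R" using dcR d0e by simp
    show "p + c0 \<noteq> 0" using Phi_sum_nz[OF pP cP] .
    show "q + c0 \<noteq> 0" using Phi_sum_nz[OF qP cP] .
  qed
  then show ?thesis
  proof
    assume "p + c0 \<in> R"
    then have "comp_add R P Phi A C = Some A"
      using ii_half[OF AK BK CK DK DA DB p q c0] d0 dcD d0e by simp
    then show ?thesis by simp
  next
    assume "q + c0 \<in> R"
    moreover have "q + p \<in> D" using d0 d0e by (simp add: add.commute)
    moreover have "q + p + c0 \<in> D" using dcD d0e by (simp add: add.commute)
    ultimately have "comp_add R P Phi B C = Some B"
      using ii_half[OF BK AK CK DK DB DA q p c0] by simp
    then show ?thesis by simp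
  qed
qed

lemma main_iii:
  assumes AK: "A \<in> K" and BK: "B \<in> K" and CK: "C \<in> K"
    and ab: "comp_add R P Phi A B = Some D" and dc: "comp_add R P Phi D C = Some E'"
    and bc: "comp_add R P Phi B C = Some E'"
  shows "comp_add R P Phi A B = Some B \<or> comp_add R P Phi B C = Some C"
proof (cases "D = B \<or> E' = C")
  case True
  then show ?thesis using ab bc by auto
next
  case False
  have DK: "D \<in> K" using CA_some[OF AK BK ab] by blast
  have "comp_add R P Phi C B = Some E'" using bc CA_comm by metis
  moreover have "comp_add R P Phi C D = Some E'" using dc CA_comm by metis
  ultimately have "B = D" using main_i[OF CK BK DK] False by blast
  then show ?thesis using False by simp
qed

end



lemma qproj_ex: fixes J :: "'a::euclidean_space set" shows "\<exists>w. w \<in> orthogonal_comp (span J) \<and> v - w \<in> span J"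
proof (rule orthogonal_subspace_decomp_exists[of J v])
  fix y z assume y: "y \<in> span J" and z: "\<And>w. w \<in> span J \<Longrightarrow> orthogonal z w" and v: "v = y + z"
  have "orthogonal w z" if "w \<in> span J" for w
    using z[OF that] by (simp add: orthogonal_commute)
  then have "z \<in> orthogonal_comp (span J)"
    unfolding orthogonal_comp_def by simp
  moreover have "v - z = y" using v by simp
  ultimately show ?thesis using y by blast
qed

lemma qproj_uniq:
  assumes "w1 \<in> orthogonal_comp (span J)" "v - w1 \<in> span J"
    and "w2 \<in> orthogonal_comp (span J)" "v - w2 \<in> span J"
  shows "w1 = w2"
proof -
  have "w1 - w2 = (v - w2) - (v - w1)" by simp
  moreover have "(v - w2) - (v - w1) \<in> span J" by (rule span_diff[OF assms(4) assms(2)])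
  ultimately have d1: "w1 - w2 \<in> span J" by simp
  have d2: "w1 - w2 \<in> orthogonal_comp (span J)"
    by (rule subspace_diff[OF subspace_orthogonal_comp assms(1) assms(3)])
  have "orthogonal (w1 - w2) (w1 - w2)" using d1 d2 unfolding orthogonal_comp_def by blast
  then show ?thesis by (simp add: orthogonal_def)
qed

lemma qproj_prop: "qproj J v \<in> orthogonal_comp (span J) \<and> v - qproj J v \<in> span J"
  unfolding qproj_def
proof (rule theI')
  obtain w where w: "w \<in> orthogonal_comp (span J) \<and> v - w \<in> span J" using qproj_ex by blast
  show "\<exists>!w. w \<in> orthogonal_comp (span J) \<and> v - w \<in> span J"
  proof (rule ex1I[of _ w])
    show "w \<in> orthogonal_comp (span J) \<and> v - w \<in> span J" by (rule w)
    fix w' assume "w' \<in> orthogonal_comp (span J) \<and> v - w' \<in> span J"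
    then show "w' = w" using qproj_uniq[of w' J v w] w by blast
  qed
qed

lemma qproj_eqI: "w \<in> orthogonal_comp (span J) \<Longrightarrow> v - w \<in> span J \<Longrightarrow> qproj J v = w"
  using qproj_prop[of J v] qproj_uniq[of "qproj J v" J v w] by blast

lemma qproj_add: "qproj J (x + y) = qproj J x + qproj J y"
proof (rule qproj_eqI)
  show "qproj J x + qproj J y \<in> orthogonal_comp (span J)"
    by (rule subspace_add[OF subspace_orthogonal_comp]) (use qproj_prop in blast)+
  have eq: "x + y - (qproj J x + qproj J y) = (x - qproj J x) + (y - qproj J y)" by simp
  show "x + y - (qproj J x + qproj J y) \<in> span J" unfolding eq
    by (rule span_add) (use qproj_prop in blast)+
qed

lemma qproj_scale: "qproj J (c *\<^sub>R x) = c *\<^sub>R qproj J x"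
proof (rule qproj_eqI)
  show "c *\<^sub>R qproj J x \<in> orthogonal_comp (span J)"
    by (rule subspace_scale[OF subspace_orthogonal_comp]) (use qproj_prop in blast)
  have eq: "c *\<^sub>R x - c *\<^sub>R qproj J x = c *\<^sub>R (x - qproj J x)" by (simp add: scaleR_diff_right)
  show "c *\<^sub>R x - c *\<^sub>R qproj J x \<in> span J" unfolding eq
    by (rule span_scale) (use qproj_prop in blast)
qed

lemma qproj_linear: "linear (qproj J)"
  by (rule linearI) (simp_all add: qproj_add qproj_scale)

lemma qproj_neg: "qproj J (-x) = - qproj J x"
  using qproj_scale[of J "-1" x] by simp

lemma qproj_diff: "qproj J (x - y) = qproj J x - qproj J y"
  using qproj_add[of J x "-y"] qproj_neg[of J y] by simp

lemma qproj_span0: "qproj J v = 0" if "v \<in> span J"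
proof (rule qproj_eqI)
  show "0 \<in> orthogonal_comp (span J)" by (rule subspace_0[OF subspace_orthogonal_comp])
qed (use that in simp)

lemma qproj_0_span: "qproj J v = 0 \<Longrightarrow> v \<in> span J"
  using qproj_prop[of J v] by simp

lemma orth_inner: assumes "w \<in> orthogonal_comp (span J)" "x \<in> span J" shows "w \<bullet> x = 0"
proof -
  have "orthogonal x w" using assms unfolding orthogonal_comp_def by blast
  then show ?thesis by (simp add: orthogonal_def inner_commute)
qed

lemma qproj_sum: "qproj J (\<Sum>i\<in>S. f i) = (\<Sum>i\<in>S. qproj J (f i))"
  using real_vector.linear_sum[OF qproj_linear] .

lemma qproj_inner: "qproj J x \<bullet> y = qproj J x \<bullet> qproj J y"
proof -
  have "qproj J x \<bullet> (y - qproj J y) = 0" using qproj_prop orth_inner by blast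
  then show ?thesis by (simp add: inner_diff_right)
qed

section \<open>Root system basics\<close>

lemma rsD:
  assumes "root_system D"
  shows "finite D" "0 \<notin> D"
    "\<And>a b. a \<in> D \<Longrightarrow> b \<in> D \<Longrightarrow> b - (2 * (b \<bullet> a) / (a \<bullet> a)) *\<^sub>R a \<in> D"
    "\<And>a b. a \<in> D \<Longrightarrow> b \<in> D \<Longrightarrow> 2 * (b \<bullet> a) / (a \<bullet> a) \<in> \<int>"
  using assms unfolding root_system_def by auto

lemma rs_neg: assumes rs: "root_system D" and a: "a \<in> D" shows "-a \<in> D"
proof -
  have "a \<noteq> 0" using rsD(2)[OF rs] a by auto
  then have "a \<bullet> a \<noteq> 0" by simp
  then have "a - (2 * (a \<bullet> a) / (a \<bullet> a)) *\<^sub>R a = -a" by (simp add: scaleR_2)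
  then show ?thesis using rsD(3)[OF rs a a] by simp
qed

lemma RS1:
  assumes rs: "root_system D" and x: "x \<in> D" and y: "y \<in> D" and neg: "x \<bullet> y < 0" and nz: "x + y \<noteq> 0"
  shows "x + y \<in> D"
proof -
  have x0: "x \<noteq> 0" and y0: "y \<noteq> 0" using rsD(2)[OF rs] x y by auto
  have xx: "x \<bullet> x > 0" and yy: "y \<bullet> y > 0" using x0 y0 by auto
  obtain m1 where m1: "2 * (x \<bullet> y) / (y \<bullet> y) = of_int m1" using rsD(4)[OF rs y x] Ints_cases by metis
  obtain m2 where m2: "2 * (y \<bullet> x) / (x \<bullet> x) = of_int m2" using rsD(4)[OF rs x y] Ints_cases by metis
  have e1: "2 * (x \<bullet> y) = of_int m1 * (y \<bullet> y)" using m1 yy by (simp add: field_simps)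
  have e2: "2 * (x \<bullet> y) = of_int m2 * (x \<bullet> x)" using m2 xx by (simp add: field_simps inner_commute)
  have "of_int m1 * (y \<bullet> y) < 0" using e1 neg by simp
  then have m1n: "m1 < 0" using yy by (simp add: mult_less_0_iff)
  have "of_int m2 * (x \<bullet> x) < 0" using e2 neg by simp
  then have m2n: "m2 < 0" using xx by (simp add: mult_less_0_iff)
  have cs: "(x \<bullet> y)\<^sup>2 \<le> (x \<bullet> x) * (y \<bullet> y)" by (rule Cauchy_Schwarz_ineq)
  have "4 * (x \<bullet> y)\<^sup>2 = (2 * (x \<bullet> y)) * (2 * (x \<bullet> y))" by (simp add: power2_eq_square)
  also have "\<dots> = of_int (m1 * m2) * ((x \<bullet> x) * (y \<bullet> y))" using e1 e2 by (simp add: algebra_simps)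
  finally have "of_int (m1 * m2) * ((x \<bullet> x) * (y \<bullet> y)) \<le> 4 * ((x \<bullet> x) * (y \<bullet> y))" using cs by linarith
  moreover have "(x \<bullet> x) * (y \<bullet> y) > 0" using xx yy by simp
  ultimately have "real_of_int (m1 * m2) \<le> 4" by (rule mult_right_le_imp_le)
  then have m12: "m1 * m2 \<le> 4" by linarith
  show ?thesis
  proof (cases "m1 = -1")
    case True
    then have c: "2 * (x \<bullet> y) / (y \<bullet> y) = -1" using m1 by simp
    have eq: "x - (2 * (x \<bullet> y) / (y \<bullet> y)) *\<^sub>R y = x + y" unfolding c by simp
    show ?thesis using rsD(3)[OF rs y x] unfolding eq .
  next
    case False
    show ?thesis
    proof (cases "m2 = -1")
      case True
      then have c: "2 * (y \<bullet> x) / (x \<bullet> x) = -1" using m2 by simp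
      have eq: "y - (2 * (y \<bullet> x) / (x \<bullet> x)) *\<^sub>R x = x + y" unfolding c by (simp add: add.commute)
      show ?thesis using rsD(3)[OF rs x y] unfolding eq .
    next
      case False2: False
      have l1: "m1 \<le> -2" using m1n False by linarith
      have l2: "m2 \<le> -2" using m2n False2 by linarith
      have "(-m1) * (-m2) \<ge> 2 * (-m2)" using l1 l2 by (intro mult_right_mono) auto
      moreover have "(-m1) * (-m2) = m1 * m2" by simp
      ultimately have "m2 = -2" using m12 l2 by linarith
      moreover have "(-m1) * (-m2) \<ge> (-m1) * 2" using l1 l2 by (intro mult_left_mono) auto
      ultimately have "m1 = -2 \<and> m2 = -2" using m12 l1 by simp
      then have a1: "x \<bullet> y = - (y \<bullet> y)" and a2: "x \<bullet> y = - (x \<bullet> x)" using e1 e2 by auto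
      have "(x + y) \<bullet> (x + y) = x \<bullet> x + 2 * (x \<bullet> y) + y \<bullet> y"
        by (simp add: inner_add_left inner_add_right inner_commute)
      also have "\<dots> = 0" using a1 a2 by simp
      finally have "x + y = 0" by simp
      then show ?thesis using nz by simp
    qed
  qed
qed


lemma QRS_cases: "y \<in> QRS D J \<Longrightarrow> \<exists>x\<in>D. y = qproj J x \<and> y \<noteq> 0"
  unfolding QRS_def by blast

lemma QRS_I: "x \<in> D \<Longrightarrow> qproj J x \<noteq> 0 \<Longrightarrow> qproj J x \<in> QRS D J"
  unfolding QRS_def by blast

lemma negQ: assumes rs: "root_system D" and y: "y \<in> QRS D J" shows "-y \<in> QRS D J"
proof -
  obtain x where x: "x \<in> D" "y = qproj J x" "y \<noteq> 0" using QRS_cases[OF y] by blast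
  have "-x \<in> D" using rs_neg[OF rs x(1)] .
  moreover have "qproj J (-x) = -y" using x qproj_neg by metis
  ultimately show ?thesis using QRS_I[of "-x" D J] x(3) by simp
qed

lemma Q1:
  assumes rs: "root_system D" and JD: "J \<subseteq> D"
    and a: "\<alpha> \<in> QRS D J" and b: "\<beta> \<in> QRS D J" and neg: "\<alpha> \<bullet> \<beta> < 0" and nz: "\<alpha> + \<beta> \<noteq> 0"
  shows "\<alpha> + \<beta> \<in> QRS D J"
proof -
  obtain a0 where a0: "a0 \<in> D" "\<alpha> = qproj J a0" using QRS_cases[OF a] by blast
  obtain b0 where b0: "b0 \<in> D" "\<beta> = qproj J b0" using QRS_cases[OF b] by blast
  define L where "L = {x \<in> D. qproj J x = \<alpha>}"
  have finL: "finite L" unfolding L_def using rsD(1)[OF rs] by simp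
  have a0L: "a0 \<in> L" unfolding L_def using a0 by simp
  define u where "u = (\<Sum>x\<in>L. x)"
  have uj: "u \<bullet> j = 0" if jJ: "j \<in> J" for j
  proof -
    have jD: "j \<in> D" using jJ JD by blast
    have j0: "j \<noteq> 0" using rsD(2)[OF rs] jD by auto
    then have jj: "j \<bullet> j \<noteq> 0" by simp
    define s where "s x = x - (2 * (x \<bullet> j) / (j \<bullet> j)) *\<^sub>R j" for x
    have sj: "s x \<bullet> j = - (x \<bullet> j)" for x
      unfolding s_def using jj by (simp add: inner_diff_left field_simps)
    have ss: "s (s x) = x" for x
    proof -
      have "s (s x) = s x + (2 * (x \<bullet> j) / (j \<bullet> j)) *\<^sub>R j" unfolding s_def[of "s x"] sj by simp
      then show ?thesis unfolding s_def by simp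
    qed
    have qj: "qproj J j = 0" using qproj_span0 span_base jJ by blast
    have sL: "s x \<in> L" if "x \<in> L" for x
    proof -
      have "s x \<in> D" unfolding s_def using rsD(3)[OF rs jD] that unfolding L_def by blast
      moreover have "qproj J (s x) = qproj J x" unfolding s_def using qj by (simp add: qproj_diff qproj_scale)
      ultimately show ?thesis using that unfolding L_def by simp
    qed
    have "(\<Sum>x\<in>L. s x \<bullet> j) = (\<Sum>x\<in>L. x \<bullet> j)"
      by (rule sum.reindex_bij_witness[where i = s and j = s]) (use ss sL in auto)
    then have "(\<Sum>x\<in>L. - (x \<bullet> j)) = (\<Sum>x\<in>L. x \<bullet> j)" using sj by simp
    then have "(\<Sum>x\<in>L. x \<bullet> j) = 0" by (simp add: sum_negf)
    then show ?thesis unfolding u_def by (simp add: inner_sum_left)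
  qed
  have uorth: "u \<bullet> y = 0" if "y \<in> span J" for y
  proof -
    have "orthogonal u y" by (rule orthogonal_to_span[OF that]) (use uj in \<open>simp add: orthogonal_def\<close>)
    then show ?thesis by (simp add: orthogonal_def)
  qed
  have bperp: "\<beta> \<in> orthogonal_comp (span J)" and bspan: "b0 - \<beta> \<in> span J" using qproj_prop b0 by auto
  have "u \<bullet> b0 = u \<bullet> \<beta> + u \<bullet> (b0 - \<beta>)" by (simp add: inner_diff_right)
  also have "u \<bullet> (b0 - \<beta>) = 0" using uorth bspan by blast
  finally have ub: "u \<bullet> b0 = u \<bullet> \<beta>" by simp
  have xb: "x \<bullet> \<beta> = \<alpha> \<bullet> \<beta>" if "x \<in> L" for x
  proof -
    have "x - \<alpha> \<in> span J" using qproj_prop[of J x] that unfolding L_def by auto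
    then have "\<beta> \<bullet> (x - \<alpha>) = 0" using orth_inner bperp by blast
    then show ?thesis by (simp add: inner_diff_right inner_commute)
  qed
  have "u \<bullet> \<beta> = (\<Sum>x\<in>L. x \<bullet> \<beta>)" unfolding u_def by (simp add: inner_sum_left)
  also have "\<dots> = (\<Sum>x\<in>L. \<alpha> \<bullet> \<beta>)" using xb by simp
  also have "\<dots> = real (card L) * (\<alpha> \<bullet> \<beta>)" by simp
  finally have "u \<bullet> \<beta> = real (card L) * (\<alpha> \<bullet> \<beta>)" .
  moreover have "card L > 0" using finL a0L card_gt_0_iff by blast
  ultimately have "u \<bullet> \<beta> < 0" using neg by (simp add: mult_pos_neg)
  then have "(\<Sum>x\<in>L. x \<bullet> b0) < 0" using ub unfolding u_def by (simp add: inner_sum_left)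
  then obtain x where xL: "x \<in> L" and xneg: "x \<bullet> b0 < 0"
    by (metis (no_types, lifting) not_less sum_nonneg)
  have xD: "x \<in> D" and qx: "qproj J x = \<alpha>" using xL unfolding L_def by auto
  have q: "qproj J (x + b0) = \<alpha> + \<beta>" using qx b0 by (simp add: qproj_add)
  have "x + b0 \<noteq> 0"
  proof
    assume "x + b0 = 0"
    then have "qproj J (x + b0) = 0" using qproj_span0 span_zero by metis
    then show False using q nz by simp
  qed
  then have "x + b0 \<in> D" using RS1[OF rs xD b0(1) xneg] by simp
  then show ?thesis using QRS_I[of "x + b0" D J] q nz by simp
qed

lemma P1Q:
  assumes rs: "root_system D" and JD: "J \<subseteq> D"
    and a: "\<alpha> \<in> QRS D J" and b: "\<beta> \<in> QRS D J" and c: "\<gamma> \<in> QRS D J"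
    and ab: "\<alpha> + \<beta> \<in> QRS D J" and abc: "\<alpha> + \<beta> + \<gamma> \<in> QRS D J"
    and n1: "\<alpha> + \<gamma> \<noteq> 0" and n2: "\<beta> + \<gamma> \<noteq> 0"
  shows "\<alpha> + \<gamma> \<in> QRS D J \<or> \<beta> + \<gamma> \<in> QRS D J"
proof (rule ccontr)
  assume h: "\<not> (\<alpha> + \<gamma> \<in> QRS D J \<or> \<beta> + \<gamma> \<in> QRS D J)"
  define \<delta> where "\<delta> = \<alpha> + \<beta> + \<gamma>"
  have g1: "\<alpha> \<bullet> \<gamma> \<ge> 0" using Q1[OF rs JD a c _ n1] h by force
  have g2: "\<beta> \<bullet> \<gamma> \<ge> 0" using Q1[OF rs JD b c _ n2] h by force
  have e1: "\<delta> + -\<alpha> = \<beta> + \<gamma>" unfolding \<delta>_def by (simp add: algebra_simps)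
  have e2: "\<delta> + -\<beta> = \<alpha> + \<gamma>" unfolding \<delta>_def by (simp add: algebra_simps)
  have d: "\<delta> \<in> QRS D J" using abc unfolding \<delta>_def .
  have g3: "\<delta> \<bullet> -\<alpha> \<ge> 0"
  proof (rule ccontr)
    assume "\<not> \<delta> \<bullet> -\<alpha> \<ge> 0"
    then have lt: "\<delta> \<bullet> -\<alpha> < 0" by simp
    have nz': "\<delta> + -\<alpha> \<noteq> 0" using e1 n2 by simp
    have "\<delta> + -\<alpha> \<in> QRS D J" by (rule Q1[OF rs JD d negQ[OF rs a] lt nz'])
    then show False using h e1 by simp
  qed
  have g4: "\<delta> \<bullet> -\<beta> \<ge> 0"
  proof (rule ccontr)
    assume "\<not> \<delta> \<bullet> -\<beta> \<ge> 0"
    then have lt: "\<delta> \<bullet> -\<beta> < 0" by simp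
    have nz': "\<delta> + -\<beta> \<noteq> 0" using e2 n1 by simp
    have "\<delta> + -\<beta> \<in> QRS D J" by (rule Q1[OF rs JD d negQ[OF rs b] lt nz'])
    then show False using h e2 by simp
  qed
  have "\<alpha> + \<beta> \<noteq> 0" using ab unfolding QRS_def by blast
  then have pos: "(\<alpha> + \<beta>) \<bullet> (\<alpha> + \<beta>) > 0" by simp
  have "\<delta> \<bullet> (\<alpha> + \<beta>) = (\<alpha> + \<beta>) \<bullet> (\<alpha> + \<beta>) + \<alpha> \<bullet> \<gamma> + \<beta> \<bullet> \<gamma>"
    unfolding \<delta>_def by (simp add: inner_add_left inner_add_right inner_commute)
  moreover have "\<delta> \<bullet> (\<alpha> + \<beta>) = - (\<delta> \<bullet> -\<alpha>) - (\<delta> \<bullet> -\<beta>)" by (simp add: inner_add_right)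
  ultimately show False using g1 g2 g3 g4 pos by linarith
qed


lemma baseD:
  fixes D S :: "'a::euclidean_space set"
  assumes "is_base D S"
  shows "S \<subseteq> D" "independent S" "finite S"
    "\<And>a. a \<in> D \<Longrightarrow> \<exists>c::'a \<Rightarrow> int. a = (\<Sum>\<sigma>\<in>S. of_int (c \<sigma>) *\<^sub>R \<sigma>) \<and>
        ((\<forall>\<sigma>\<in>S. c \<sigma> \<ge> 0) \<or> (\<forall>\<sigma>\<in>S. c \<sigma> \<le> 0))"
proof -
  show "S \<subseteq> D" using assms unfolding is_base_def by blast
  show ind: "independent S" using assms unfolding is_base_def by blast
  show "finite S" using ind unfolding eucl.independent_explicit by blast
  show "\<And>a. a \<in> D \<Longrightarrow> \<exists>c::'a \<Rightarrow> int. a = (\<Sum>\<sigma>\<in>S. of_int (c \<sigma>) *\<^sub>R \<sigma>) \<and>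
        ((\<forall>\<sigma>\<in>S. c \<sigma> \<ge> 0) \<or> (\<forall>\<sigma>\<in>S. c \<sigma> \<le> 0))"
    using assms unfolding is_base_def by blast
qed

lemma qproj_inj:
  assumes ind: "independent S" and JS: "J \<subseteq> S"
  shows "inj_on (qproj J) (S - J)"
proof (rule inj_onI)
  fix x y assume x: "x \<in> S - J" and y: "y \<in> S - J" and q: "qproj J x = qproj J y"
  show "x = y"
  proof (rule ccontr)
    assume xy: "x \<noteq> y"
    have "qproj J (x - y) = 0" using q by (simp add: qproj_diff)
    then have d: "x - y \<in> span J" by (rule qproj_0_span)
    have "J \<subseteq> S - {x}" using JS x by blast
    then have "span J \<subseteq> span (S - {x})" by (rule span_mono)
    then have "x - y \<in> span (S - {x})" using d by blast
    moreover have "y \<in> span (S - {x})" using y xy by (intro span_base) blast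
    ultimately have "(x - y) + y \<in> span (S - {x})" by (rule span_add)
    then have "x \<in> span (S - {x})" by simp
    then have "dependent S" unfolding dependent_def using x by blast
    then show False using ind by simp
  qed
qed

lemma qproj_sum_base:
  assumes fin: "finite S" and JS: "J \<subseteq> S"
  shows "qproj J (\<Sum>\<sigma>\<in>S. f \<sigma> *\<^sub>R \<sigma>) = (\<Sum>\<sigma>\<in>S - J. f \<sigma> *\<^sub>R qproj J \<sigma>)"
proof -
  have "qproj J (\<Sum>\<sigma>\<in>S. f \<sigma> *\<^sub>R \<sigma>) = (\<Sum>\<sigma>\<in>S. f \<sigma> *\<^sub>R qproj J \<sigma>)"
    by (simp add: qproj_sum qproj_scale)
  also have "\<dots> = (\<Sum>\<sigma>\<in>S - J. f \<sigma> *\<^sub>R qproj J \<sigma>)"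
  proof (rule sum.mono_neutral_right[OF fin])
    show "S - J \<subseteq> S" by blast
    show "\<forall>i\<in>S - (S - J). f i *\<^sub>R qproj J i = 0"
    proof
      fix i assume "i \<in> S - (S - J)"
      then have "i \<in> J" by blast
      then have "qproj J i = 0" by (intro qproj_span0 span_base)
      then show "f i *\<^sub>R qproj J i = 0" by simp
    qed
  qed
  finally show ?thesis .
qed

lemma sum_base_reindex:
  assumes ind: "independent S" and JS: "J \<subseteq> S"
  shows "(\<Sum>\<tau>\<in>qproj J ` (S - J). h \<tau>) = (\<Sum>\<sigma>\<in>S - J. h (qproj J \<sigma>))"
  using sum.reindex[OF qproj_inj[OF ind JS]] by simp

lemma base_expansion:
  fixes D S J :: "'a::euclidean_space set"
  assumes base: "is_base D S" and JS: "J \<subseteq> S" and a: "a \<in> D"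
  shows "\<exists>c::'a \<Rightarrow> int. qproj J a = (\<Sum>\<tau>\<in>QRS_base S J. of_int (c \<tau>) *\<^sub>R \<tau>) \<and>
          ((\<forall>\<tau>\<in>QRS_base S J. c \<tau> \<ge> 0) \<or> (\<forall>\<tau>\<in>QRS_base S J. c \<tau> \<le> 0))"
proof -
  have ind: "independent S" and fin: "finite S" using baseD[OF base] by auto
  obtain c :: "'a \<Rightarrow> int" where ae: "a = (\<Sum>\<sigma>\<in>S. of_int (c \<sigma>) *\<^sub>R \<sigma>)"
    and sg: "(\<forall>\<sigma>\<in>S. c \<sigma> \<ge> 0) \<or> (\<forall>\<sigma>\<in>S. c \<sigma> \<le> 0)" using baseD(4)[OF base a] by blast
  define c' where "c' \<tau> = c (inv_into (S - J) (qproj J) \<tau>)" for \<tau>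
  have inj: "inj_on (qproj J) (S - J)" by (rule qproj_inj[OF ind JS])
  have c'q: "c' (qproj J \<sigma>) = c \<sigma>" if "\<sigma> \<in> S - J" for \<sigma>
    unfolding c'_def using inv_into_f_f[OF inj that] by simp
  have "qproj J a = (\<Sum>\<sigma>\<in>S - J. of_int (c \<sigma>) *\<^sub>R qproj J \<sigma>)"
    unfolding ae by (rule qproj_sum_base[OF fin JS])
  also have "\<dots> = (\<Sum>\<sigma>\<in>S - J. of_int (c' (qproj J \<sigma>)) *\<^sub>R qproj J \<sigma>)"
    using c'q by simp
  also have "\<dots> = (\<Sum>\<tau>\<in>QRS_base S J. of_int (c' \<tau>) *\<^sub>R \<tau>)"
    unfolding QRS_base_def by (rule sum_base_reindex[OF ind JS, symmetric])
  finally have e: "qproj J a = (\<Sum>\<tau>\<in>QRS_base S J. of_int (c' \<tau>) *\<^sub>R \<tau>)" .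
  have "(\<forall>\<tau>\<in>QRS_base S J. c' \<tau> \<ge> 0) \<or> (\<forall>\<tau>\<in>QRS_base S J. c' \<tau> \<le> 0)"
  proof (cases "\<forall>\<sigma>\<in>S. c \<sigma> \<ge> 0")
    case True
    have "\<forall>\<tau>\<in>QRS_base S J. c' \<tau> \<ge> 0"
    proof
      fix \<tau> assume "\<tau> \<in> QRS_base S J"
      then obtain \<sigma> where "\<sigma> \<in> S - J" "\<tau> = qproj J \<sigma>" unfolding QRS_base_def by blast
      then show "c' \<tau> \<ge> 0" using c'q True by simp
    qed
    then show ?thesis by simp
  next
    case False
    then have F: "\<forall>\<sigma>\<in>S. c \<sigma> \<le> 0" using sg by blast
    have "\<forall>\<tau>\<in>QRS_base S J. c' \<tau> \<le> 0"
    proof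
      fix \<tau> assume "\<tau> \<in> QRS_base S J"
      then obtain \<sigma> where "\<sigma> \<in> S - J" "\<tau> = qproj J \<sigma>" unfolding QRS_base_def by blast
      then show "c' \<tau> \<le> 0" using c'q F by simp
    qed
    then show ?thesis by simp
  qed
  then show ?thesis using e by blast
qed

lemma base_indep:
  assumes base: "is_base D S" and JS: "J \<subseteq> S"
    and z: "(\<Sum>\<tau>\<in>QRS_base S J. e \<tau> *\<^sub>R \<tau>) = 0" and t: "\<tau> \<in> QRS_base S J"
  shows "e \<tau> = 0"
proof -
  have ind: "independent S" and fin: "finite S" using baseD[OF base] by auto
  have finJ: "finite J" using fin JS finite_subset by blast
  define v where "v = (\<Sum>\<sigma>\<in>S - J. e (qproj J \<sigma>) *\<^sub>R \<sigma>)"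
  have "qproj J v = (\<Sum>\<sigma>\<in>S - J. e (qproj J \<sigma>) *\<^sub>R qproj J \<sigma>)"
    unfolding v_def by (simp add: qproj_sum qproj_scale)
  also have "\<dots> = (\<Sum>\<tau>\<in>QRS_base S J. e \<tau> *\<^sub>R \<tau>)"
    unfolding QRS_base_def by (rule sum_base_reindex[OF ind JS, symmetric])
  finally have "qproj J v = 0" using z by simp
  then have "v \<in> span J" by (rule qproj_0_span)
  then obtain f where f: "v = (\<Sum>j\<in>J. f j *\<^sub>R j)" using real_vector.span_finite[OF finJ] by blast
  define g where "g \<sigma> = (if \<sigma> \<in> J then - f \<sigma> else e (qproj J \<sigma>))" for \<sigma>
  have "(\<Sum>\<sigma>\<in>S. g \<sigma> *\<^sub>R \<sigma>) = (\<Sum>\<sigma>\<in>S - J. g \<sigma> *\<^sub>R \<sigma>) + (\<Sum>\<sigma>\<in>J. g \<sigma> *\<^sub>R \<sigma>)"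
    by (rule sum.subset_diff[OF JS fin])
  also have "(\<Sum>\<sigma>\<in>S - J. g \<sigma> *\<^sub>R \<sigma>) = v" unfolding v_def g_def by (rule sum.cong) auto
  also have "(\<Sum>\<sigma>\<in>J. g \<sigma> *\<^sub>R \<sigma>) = - v" unfolding f g_def by (simp add: sum_negf)
  finally have "(\<Sum>\<sigma>\<in>S. g \<sigma> *\<^sub>R \<sigma>) = 0" by simp
  then have g0: "\<forall>\<sigma>\<in>S. g \<sigma> = 0" using ind unfolding eucl.independent_explicit by blast
  obtain \<sigma> where s: "\<sigma> \<in> S - J" and ts: "\<tau> = qproj J \<sigma>" using t unfolding QRS_base_def by blast
  have "g \<sigma> = e \<tau>" unfolding g_def using s ts by simp
  then show ?thesis using g0 s by simp
qed



lemma invsys_inst: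
  fixes \<Delta> \<Sigma> J \<Phi> :: "'a::euclidean_space set"
  assumes rs: "root_system \<Delta>" and base: "is_base \<Delta> \<Sigma>" and J: "J \<subset> \<Sigma>"
    and inv: "inversion_set (QRS \<Delta> J) (QRS_pos \<Delta> \<Sigma> J) \<Phi>"
  shows "invsys (QRS \<Delta> J) (QRS_pos \<Delta> \<Sigma> J) \<Phi>"
proof -
  have JS: "J \<subseteq> \<Sigma>" using J by blast
  have JD: "J \<subseteq> \<Delta>" using JS baseD(1)[OF base] by blast
  let ?R = "QRS \<Delta> J" and ?P = "QRS_pos \<Delta> \<Sigma> J" and ?B = "QRS_base \<Sigma> J"
  have Pd: "x \<in> ?P \<longleftrightarrow> x \<in> ?R \<and> (\<exists>c::'a \<Rightarrow> int. x = (\<Sum>\<tau>\<in>?B. of_int (c \<tau>) *\<^sub>R \<tau>) \<and> (\<forall>\<tau>\<in>?B. c \<tau> \<ge> 0))" for x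
    unfolding QRS_pos_def by blast
  show ?thesis
  proof (unfold_locales)
    show "finite ?R" unfolding QRS_def using rsD(1)[OF rs] by simp
    show "0 \<notin> ?R" unfolding QRS_def by simp
    show "\<And>x. x \<in> ?R \<Longrightarrow> -x \<in> ?R" using negQ[OF rs] by blast
    show "?P \<subseteq> ?R" unfolding QRS_pos_def by blast
  next
    fix x assume x: "x \<in> ?R"
    obtain a where a: "a \<in> \<Delta>" "x = qproj J a" using QRS_cases[OF x] by blast
    obtain c :: "'a \<Rightarrow> int" where ce: "qproj J a = (\<Sum>\<tau>\<in>?B. of_int (c \<tau>) *\<^sub>R \<tau>)"
      and sg: "(\<forall>\<tau>\<in>?B. c \<tau> \<ge> 0) \<or> (\<forall>\<tau>\<in>?B. c \<tau> \<le> 0)"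
      using base_expansion[OF base JS a(1)] by blast
    show "x \<in> ?P \<or> -x \<in> ?P"
    proof (cases "\<forall>\<tau>\<in>?B. c \<tau> \<ge> 0")
      case True
      then have "x \<in> ?P" unfolding Pd using x a ce by blast
      then show ?thesis by simp
    next
      case False
      then have neg: "\<forall>\<tau>\<in>?B. - c \<tau> \<ge> 0" using sg by auto
      have "-x = (\<Sum>\<tau>\<in>?B. of_int (- c \<tau>) *\<^sub>R \<tau>)" using a ce by (simp add: sum_negf)
      moreover have "-x \<in> ?R" using negQ[OF rs x] .
      ultimately have "-x \<in> ?P" unfolding Pd using neg
        by (intro conjI exI[of _ "\<lambda>\<tau>. - c \<tau>"]) auto
      then show ?thesis by simp
    qed
  next
    fix x assume xP: "x \<in> ?P"
    show "-x \<notin> ?P"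
    proof
      assume nxP: "-x \<in> ?P"
      obtain c :: "'a \<Rightarrow> int" where x: "x = (\<Sum>\<tau>\<in>?B. of_int (c \<tau>) *\<^sub>R \<tau>)" and c: "\<forall>\<tau>\<in>?B. c \<tau> \<ge> 0"
        using xP unfolding Pd by blast
      obtain d :: "'a \<Rightarrow> int" where nx: "-x = (\<Sum>\<tau>\<in>?B. of_int (d \<tau>) *\<^sub>R \<tau>)" and d: "\<forall>\<tau>\<in>?B. d \<tau> \<ge> 0"
        using nxP unfolding Pd by blast
      have "(\<Sum>\<tau>\<in>?B. (of_int (c \<tau>) + of_int (d \<tau>)) *\<^sub>R \<tau>) = x + -x"
        unfolding x nx[unfolded x] by (simp add: scaleR_add_left sum.distrib)
      then have z: "(\<Sum>\<tau>\<in>?B. (of_int (c \<tau>) + of_int (d \<tau>)) *\<^sub>R \<tau>) = 0" by simp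
      have "c \<tau> = 0" if t: "\<tau> \<in> ?B" for \<tau>
      proof -
        have "real_of_int (c \<tau>) + real_of_int (d \<tau>) = 0"
          using base_indep[OF base JS z t] by simp
        then have "c \<tau> + d \<tau> = 0" by linarith
        moreover have "c \<tau> \<ge> 0" "d \<tau> \<ge> 0" using c d t by auto
        ultimately show ?thesis by linarith
      qed
      then have "x = 0" unfolding x by simp
      then show False using xP unfolding QRS_pos_def QRS_def by blast
    qed
  next
    fix x y assume xP: "x \<in> ?P" and yP: "y \<in> ?P" and r: "x + y \<in> ?R"
    obtain c :: "'a \<Rightarrow> int" where x: "x = (\<Sum>\<tau>\<in>?B. of_int (c \<tau>) *\<^sub>R \<tau>)" and c: "\<forall>\<tau>\<in>?B. c \<tau> \<ge> 0"
      using xP unfolding Pd by blast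
    obtain d :: "'a \<Rightarrow> int" where y: "y = (\<Sum>\<tau>\<in>?B. of_int (d \<tau>) *\<^sub>R \<tau>)" and d: "\<forall>\<tau>\<in>?B. d \<tau> \<ge> 0"
      using yP unfolding Pd by blast
    have "x + y = (\<Sum>\<tau>\<in>?B. of_int (c \<tau> + d \<tau>) *\<^sub>R \<tau>)"
      unfolding x y by (simp add: scaleR_add_left sum.distrib)
    moreover have "\<forall>\<tau>\<in>?B. c \<tau> + d \<tau> \<ge> 0" using c d by auto
    ultimately show "x + y \<in> ?P" unfolding Pd using r
      by (intro conjI exI[of _ "\<lambda>\<tau>. c \<tau> + d \<tau>"]) auto
  next
    fix \<alpha> \<beta> \<gamma> assume "\<alpha> \<in> ?R" "\<beta> \<in> ?R" "\<gamma> \<in> ?R" "\<alpha> + \<beta> \<in> ?R" "\<alpha> + \<beta> + \<gamma> \<in> ?R"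
      "\<alpha> + \<gamma> \<noteq> 0" "\<beta> + \<gamma> \<noteq> 0"
    then show "\<alpha> + \<gamma> \<in> ?R \<or> \<beta> + \<gamma> \<in> ?R" by (rule P1Q[OF rs JD])
  next
    show "\<Phi> \<subseteq> ?P" using inv unfolding inversion_set_def by blast
  next
    fix x y assume "x \<in> \<Phi>" "y \<in> \<Phi>" "x + y \<in> ?R"
    then show "x + y \<in> \<Phi>" using inv unfolding inversion_set_def closed_in_rs_def by blast
  next
    fix x y assume "x \<in> ?P - \<Phi>" "y \<in> ?P - \<Phi>" "x + y \<in> ?R"
    then show "x + y \<in> ?P - \<Phi>" using inv unfolding inversion_set_def closed_in_rs_def by blast
  qed
qed

theorem proposition4p24:
  fixes \<Delta> \<Sigma> J \<Phi> A B C :: "'a::euclidean_space set"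
  defines "R \<equiv> QRS \<Delta> J"
      and "Rpos \<equiv> QRS_pos \<Delta> \<Sigma> J"
  assumes rs: "root_system \<Delta>"
      and base: "is_base \<Delta> \<Sigma>"
      and J: "J \<subset> \<Sigma>"
      and inv: "inversion_set R Rpos \<Phi>"
      and A: "A \<in> components Rpos \<Phi>"
      and B: "B \<in> components Rpos \<Phi>"
      and C: "C \<in> components Rpos \<Phi>"
  shows "(\<forall>D. comp_add R Rpos \<Phi> A B = Some D \<and> comp_add R Rpos \<Phi> A C = Some D \<and> D \<noteq> A
             \<longrightarrow> B = C)
       \<and> (\<forall>D. comp_add R Rpos \<Phi> A B = Some D \<and> comp_add R Rpos \<Phi> D C = Some D
             \<longrightarrow> comp_add R Rpos \<Phi> A C = Some A \<or> comp_add R Rpos \<Phi> B C = Some B)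
       \<and> (\<forall>D E. comp_add R Rpos \<Phi> A B = Some D \<and> comp_add R Rpos \<Phi> D C = Some E
                \<and> comp_add R Rpos \<Phi> B C = Some E
             \<longrightarrow> comp_add R Rpos \<Phi> A B = Some B \<or> comp_add R Rpos \<Phi> B C = Some C)"
proof -
  have I: "invsys R Rpos \<Phi>" unfolding R_def Rpos_def
    using invsys_inst[OF rs base J inv[unfolded R_def Rpos_def]] .
  interpret invsys R Rpos \<Phi> by (rule I)
  show ?thesis
  proof (intro conjI allI impI)
    fix D assume h: "comp_add R Rpos \<Phi> A B = Some D \<and> comp_add R Rpos \<Phi> A C = Some D \<and> D \<noteq> A"
    then show "B = C" using main_i[OF A B C] by blast
  next
    fix D assume h: "comp_add R Rpos \<Phi> A B = Some D \<and> comp_add R Rpos \<Phi> D C = Some D"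
    then show "comp_add R Rpos \<Phi> A C = Some A \<or> comp_add R Rpos \<Phi> B C = Some B"
      using main_ii[OF A B C] by blast
  next
    fix D E assume h: "comp_add R Rpos \<Phi> A B = Some D \<and> comp_add R Rpos \<Phi> D C = Some E
                \<and> comp_add R Rpos \<Phi> B C = Some E"
    then show "comp_add R Rpos \<Phi> A B = Some B \<or> comp_add R Rpos \<Phi> B C = Some C"
      using main_iii[OF A B C] by blast
  qed
qed

end
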